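(* Let $k\ge1$ and $\tilde d=(d_1,\dots,d_k)$ with integers $d_i\ge 2$. Consider the cone percolation process with radius of influence $R$ on the rooted $k$-periodic tree $\mathbb{T}^+_{\tilde d}$, and let $\mathbb{P}_+$ denote its law and $V$ the survival event. (I) If $\sum_{i=0}^{k-1} c_i\,\mathbb{E}\big(G^R I_i(R)\big) > 1+p_0$, then $\mathbb{P}_+(V)>0$. (II) If $\sum_{i=0}^{k-1}\bar c_i\,\mathbb{E}\big(h_i(R) I_i(R)\big)\le 1$, then $\mathbb{P}_+(V)=0$.
   Context: Cone percolation process: Let $\mathbb{T}$ be a tree with origin $\mathcal{O}$ and graph distance $d(\cdot,\cdot)$. Write $u\le v$ if $u$ lies on the path from $\mathcal{O}$ to $v$. Let $R$ be a random variable with values in $\{0,1,2,\dots\}$, $p_k=\mathbb{P}(R=k)$, and assume $p_0\in(0,1)$. Let $\{R_v\}$ be i.i.d. copies of $R$ indexed by the vertices. For each vertex $u$ let $B_u=\{v: u\le v,\ d(u,v)\le R_u\}$. Set $I_0=\{\mathcal{O}\}$, $I_{n+1}=\bigcup_{u\in I_n}B_u$, $I=\bigcup_n I_n$; survival is the event $V=\{|I|=\infty\}$. Periodic trees: the $k$-periodic tree $\mathbb{T}_{\tilde d}$ is the tree with origin $\mathcal{O}$ in which every vertex at distance $nk+i-1$ from $\mathcal{O}$ ($n\in\{0,1,2,\dots\}$, $i\in\{1,\dots,k\}$) has degree $d_i+1$. The rooted version $\mathbb{T}^+_{\tilde d}$ is obtained by choosing a neighbour $u$ of $\mathcal{O}$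 and deleting all vertices $w$ with $u\le w$; thus every vertex at distance $nk+i-1$ from $\mathcal{O}$ has exactly $d_i$ children. Notation: $d_{(1)}\le\dots\le d_{(k)}$ are the entries of $\tilde d$ in increasing order; $G=(\prod_{j=1}^k d_j)^{1/k}$; $c_0=\bar c_0=1$, and for $i=1,\dots,k-1$, $c_i=\prod_{j=1}^i d_{(j)}/G^i$, $\bar c_i=\prod_{j=k+1-i}^k d_{(j)}/G^i$. For $i=0,\dots,k-1$, $I_i(R)=1$ if $R=nk+i$ for some integer $n\ge0$ and $I_i(R)=0$ otherwise. Let $\underline{x}_{n,0}=(\prod_{j=1}^k d_j)^n$ and $\underline{x}_{n,i}=(\prod_{j=1}^k d_j)^n\prod_{j=1}^i d_{(j)}$ for $i\ge1$. For $R\equiv i \pmod k$, with $N=(R-i)/k$, $$h_i(R)=\Big[\sum_{m=0}^{N-1}\sum_{j=0}^{k-1}(\underline{x}_{m,j})^{-1}+\sum_{j=0}^{i-1}(\underline{x}_{N,j})^{-1}\Big]G^R$$ (the quantity $h_i(R)$ only appears multiplied by $I_i(R)$). *)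

theory Defs
  imports "HOL-Probability.Probability"
begin

text \<open>A vertex at distance m from the origin (the empty list) has d (m mod k) children,
  where d 0, ..., d (k-1) stand for d_1, ..., d_k.\<close>
definition tree_plus :: "nat \<Rightarrow> (nat \<Rightarrow> nat) \<Rightarrow> nat list set" where
  "tree_plus k d = {xs. \<forall>j<length xs. xs ! j < d (j mod k)}"

definition cone :: "nat \<Rightarrow> (nat \<Rightarrow> nat) \<Rightarrow> (nat list \<Rightarrow> nat) \<Rightarrow> nat list \<Rightarrow> nat list set" where
  "cone k d \<omega> u = {v \<in> tree_plus k d. (\<exists>w. v = u @ w) \<and> length v - length u \<le> \<omega> u}"

fun infected :: "nat \<Rightarrow> (nat \<Rightarrow> nat) \<Rightarrow> (nat list \<Rightarrow> nat) \<Rightarrow> nat \<Rightarrow> nat list set" where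
  "infected k d \<omega> 0 = {[]}"
| "infected k d \<omega> (Suc n) = (\<Union>u\<in>infected k d \<omega> n. cone k d \<omega> u)"

definition survives :: "nat \<Rightarrow> (nat \<Rightarrow> nat) \<Rightarrow> (nat list \<Rightarrow> nat) \<Rightarrow> bool" where
  "survives k d \<omega> \<longleftrightarrow> infinite (\<Union>n. infected k d \<omega> n)"

definition perc_space :: "nat pmf \<Rightarrow> (nat list \<Rightarrow> nat) measure" where
  "perc_space p = PiM UNIV (\<lambda>_. measure_pmf p)"

definition survival_event :: "nat \<Rightarrow> (nat \<Rightarrow> nat) \<Rightarrow> nat pmf \<Rightarrow> (nat list \<Rightarrow> nat) set" where
  "survival_event k d p = {\<omega> \<in> space (perc_space p). survives k d \<omega>}"

definition Gm :: "nat \<Rightarrow> (nat \<Rightarrow> nat) \<Rightarrow> real" where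
  "Gm k d = (\<Prod>j<k. real (d j)) powr (1 / real k)"

text \<open>sorted_d k d ! (j-1) = d_(j), the j-th smallest entry.\<close>
definition sorted_d :: "nat \<Rightarrow> (nat \<Rightarrow> nat) \<Rightarrow> nat list" where
  "sorted_d k d = sort (map d [0..<k])"

definition cc :: "nat \<Rightarrow> (nat \<Rightarrow> nat) \<Rightarrow> nat \<Rightarrow> real" where
  "cc k d i = (\<Prod>j<i. real (sorted_d k d ! j)) / Gm k d ^ i"

definition cbar :: "nat \<Rightarrow> (nat \<Rightarrow> nat) \<Rightarrow> nat \<Rightarrow> real" where
  "cbar k d i = (\<Prod>j\<in>{k-i..<k}. real (sorted_d k d ! j)) / Gm k d ^ i"

definition Ind :: "nat \<Rightarrow> nat \<Rightarrow> nat \<Rightarrow> real" where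
  "Ind k i r = (if \<exists>n. r = n * k + i then 1 else 0)"

definition xlow :: "nat \<Rightarrow> (nat \<Rightarrow> nat) \<Rightarrow> nat \<Rightarrow> nat \<Rightarrow> real" where
  "xlow k d n j = (\<Prod>l<k. real (d l)) ^ n * (\<Prod>l<j. real (sorted_d k d ! l))"

definition hh :: "nat \<Rightarrow> (nat \<Rightarrow> nat) \<Rightarrow> nat \<Rightarrow> nat \<Rightarrow> real" where
  "hh k d i r = (let N = (r - i) div k in
     ((\<Sum>m<N. \<Sum>j<k. 1 / xlow k d m j) + (\<Sum>j<i. 1 / xlow k d N j)) * Gm k d ^ r)"

end

theory Submission
  imports Defs
begin



definition TT :: "(nat \<Rightarrow> nat) \<Rightarrow> nat list set" where
  "TT D = {xs. \<forall>j<length xs. xs ! j < D j}"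

definition sh :: "nat \<Rightarrow> (nat \<Rightarrow> nat) \<Rightarrow> nat \<Rightarrow> nat" where
  "sh m D = (\<lambda>j. D (j + m))"

definition sw :: "nat list \<Rightarrow> (nat list \<Rightarrow> nat) \<Rightarrow> nat list \<Rightarrow> nat" where
  "sw u \<omega> = (\<lambda>w. \<omega> (u @ w))"

definition cn :: "(nat \<Rightarrow> nat) \<Rightarrow> (nat list \<Rightarrow> nat) \<Rightarrow> nat list \<Rightarrow> nat list set" where
  "cn D \<omega> u = {v \<in> TT D. (\<exists>w. v = u @ w) \<and> length v - length u \<le> \<omega> u}"

inductive rch :: "(nat \<Rightarrow> nat) \<Rightarrow> (nat list \<Rightarrow> nat) \<Rightarrow> nat list \<Rightarrow> bool"
  for D \<omega> where
  rch0: "rch D \<omega> []"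
| rchS: "rch D \<omega> u \<Longrightarrow> v \<in> cn D \<omega> u \<Longrightarrow> rch D \<omega> v"

definition surv :: "(nat \<Rightarrow> nat) \<Rightarrow> (nat list \<Rightarrow> nat) \<Rightarrow> bool" where
  "surv D \<omega> \<longleftrightarrow> infinite {v. rch D \<omega> v}"

lemma sh_sh[simp]: "sh a (sh b D) = sh (a + b) D"
  by (simp add: sh_def add.assoc)

lemma sh_0[simp]: "sh 0 D = D" by (simp add: sh_def)

lemma sw_sw[simp]: "sw a (sw b \<omega>) = sw (b @ a) \<omega>"
  by (simp add: sw_def)

lemma TT_Nil[simp]: "[] \<in> TT D" by (simp add: TT_def)

lemma TT_append: "u @ w \<in> TT D \<longleftrightarrow> u \<in> TT D \<and> w \<in> TT (sh (length u) D)"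
proof
  assume h: "u @ w \<in> TT D"
  show "u \<in> TT D \<and> w \<in> TT (sh (length u) D)"
  proof
    show "u \<in> TT D" unfolding TT_def
    proof (intro CollectI allI impI)
      fix j assume "j < length u"
      then have "(u@w) ! j < D j" using h[unfolded TT_def] by auto
      then show "u ! j < D j" using \<open>j < length u\<close> by (simp add: nth_append)
    qed
    show "w \<in> TT (sh (length u) D)" unfolding TT_def sh_def
    proof (intro CollectI allI impI)
      fix j assume "j < length w"
      have hh: "\<forall>j<length (u@w). (u@w)!j < D j" using h by (simp add: TT_def)
      have "(u@w) ! (length u + j) < D (length u + j)" using hh[rule_format, of "length u + j"] \<open>j < length w\<close> by simp
      then show "w ! j < D (j + length u)" by (simp add: nth_append add.commute)
    qed
  qed
next
  assume h: "u \<in> TT D \<and> w \<in> TT (sh (length u) D)"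
  show "u @ w \<in> TT D" unfolding TT_def
  proof (intro CollectI allI impI)
    fix j assume j: "j < length (u @ w)"
    show "(u @ w) ! j < D j"
    proof (cases "j < length u")
      case True then show ?thesis using h by (simp add: TT_def nth_append)
    next
      case False
      then have "j - length u < length w" using j by auto
      then have "w ! (j - length u) < D (j - length u + length u)" using h by (simp add: TT_def sh_def)
      then show ?thesis using False by (simp add: nth_append)
    qed
  qed
qed

lemma rch_TT: "rch D \<omega> v \<Longrightarrow> v \<in> TT D"
  by (induction rule: rch.induct) (auto simp: cn_def)

lemma cn_shift: "u @ v \<in> cn D \<omega> (u @ w) \<longleftrightarrow> u \<in> TT D \<and> v \<in> cn (sh (length u) D) (sw u \<omega>) w"
  by (auto simp: cn_def TT_append sw_def)

lemma rch_compose: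
  assumes "rch (sh (length u) D) (sw u \<omega>) w" "rch D \<omega> u"
  shows "rch D \<omega> (u @ w)"
  using assms(1)
proof (induction rule: rch.induct)
  case rch0 then show ?case using assms(2) by simp
next
  case (rchS x v)
  have "u \<in> TT D" using rch_TT[OF assms(2)] .
  then have "u @ v \<in> cn D \<omega> (u @ x)" using rchS(2) cn_shift by blast
  then show ?case using rchS(3) rch.rchS by blast
qed

lemma Nil_cn[simp]: "[] \<in> cn D \<omega> []" by (simp add: cn_def)

lemma cn_Nil: "cn D \<omega> [] = {v \<in> TT D. length v \<le> \<omega> []}" by (auto simp: cn_def)

lemma rch_gen:
  assumes "rch D \<omega> x"
  shows "x \<in> cn D \<omega> [] \<or> (\<exists>u w. u \<in> cn D \<omega> [] \<and> u \<noteq> [] \<and> x = u @ w \<and> rch (sh (length u) D) (sw u \<omega>) w)"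
  using assms
proof (induction rule: rch.induct)
  case rch0 then show ?case by simp
next
  case (rchS x y)
  from rchS(3) show ?case
  proof
    assume x: "x \<in> cn D \<omega> []"
    show ?case
    proof (cases "y \<in> cn D \<omega> []")
      case True then show ?thesis by simp
    next
      case False
      have "x \<noteq> []" using False rchS(2) by auto
      from rchS(2) obtain w where w: "y = x @ w" by (auto simp: cn_def)
      have "x @ w \<in> cn D \<omega> (x @ [])" using rchS(2) w by simp
      then have "w \<in> cn (sh (length x) D) (sw x \<omega>) []" using cn_shift by blast
      then have "rch (sh (length x) D) (sw x \<omega>) w" using rch.rchS[OF rch.rch0] by blast
      then show ?thesis using x \<open>x \<noteq> []\<close> w by blast
    qed
  next
    assume "\<exists>u w. u \<in> cn D \<omega> [] \<and> u \<noteq> [] \<and> x = u @ w \<and> rch (sh (length u) D) (sw u \<omega>) w"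
    then obtain u w where h: "u \<in> cn D \<omega> []" "u \<noteq> []" "x = u @ w" "rch (sh (length u) D) (sw u \<omega>) w" by blast
    from rchS(2) h(3) obtain z where z: "y = u @ w @ z" by (auto simp: cn_def)
    have "u @ (w @ z) \<in> cn D \<omega> (u @ w)" using rchS(2) z h(3) by simp
    then have "w @ z \<in> cn (sh (length u) D) (sw u \<omega>) w" using cn_shift by blast
    then have "rch (sh (length u) D) (sw u \<omega>) (w @ z)" using rch.rchS[OF h(4)] by blast
    then show ?case using h z by blast
  qed
qed

fun En :: "nat \<Rightarrow> (nat \<Rightarrow> nat) \<Rightarrow> (nat list \<Rightarrow> nat) \<Rightarrow> bool" where
  "En 0 D \<omega> = True"
| "En (Suc n) D \<omega> = (1 \<le> \<omega> [] \<and> (\<exists>u\<in>TT D. length u = \<omega> [] \<and> En n (sh (\<omega> []) D) (sw u \<omega>)))"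

lemma En_rch: "En n D \<omega> \<Longrightarrow> \<exists>v. rch D \<omega> v \<and> n \<le> length v"
proof (induction n arbitrary: D \<omega>)
  case 0 then show ?case using rch0 by blast
next
  case (Suc n)
  then obtain u where u: "u \<in> TT D" "length u = \<omega> []" "1 \<le> \<omega> []" "En n (sh (\<omega> []) D) (sw u \<omega>)" by auto
  from Suc.IH[OF u(4)] obtain v where v: "rch (sh (length u) D) (sw u \<omega>) v" "n \<le> length v" using u(2) by auto
  have "u \<in> cn D \<omega> []" using u by (simp add: cn_Nil)
  then have "rch D \<omega> u" using rch.rchS[OF rch0] by blast
  then have "rch D \<omega> (u @ v)" using rch_compose v(1) by blast
  then show ?case using v u by (intro exI[of _ "u @ v"]) auto
qed

lemma En_Suc_imp: "En (Suc n) D \<omega> \<Longrightarrow> En n D \<omega>"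
proof (induction n arbitrary: D \<omega>)
  case 0 then show ?case by simp
next
  case (Suc n)
  have h: "1 \<le> \<omega> [] \<and> (\<exists>u\<in>TT D. length u = \<omega> [] \<and> En (Suc n) (sh (\<omega> []) D) (sw u \<omega>))"
    using Suc.prems by (simp only: En.simps(2)[of "Suc n" D \<omega>])
  then obtain u where u: "u \<in> TT D" "length u = \<omega> []" "En (Suc n) (sh (\<omega> []) D) (sw u \<omega>)"
    by blast
  have "En n (sh (\<omega> []) D) (sw u \<omega>)" using Suc.IH[OF u(3)] .
  then show ?case unfolding En.simps(2)[of n D \<omega>] using u h by (intro conjI bexI[of _ u]) auto
qed

lemma En_surv:
  assumes "\<forall>n. En n D \<omega>" shows "surv D \<omega>"
  unfolding surv_def
proof
  assume f: "finite {v. rch D \<omega> v}"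
  define N where "N = Suc (Max (length ` {v. rch D \<omega> v}))"
  obtain v where v: "rch D \<omega> v" "N \<le> length v" using En_rch assms by blast
  have "length v \<le> Max (length ` {v. rch D \<omega> v})" using f v(1) by (intro Max_ge) auto
  then show False using v(2) N_def by simp
qed

lemma finite_TT_le: "finite {v \<in> TT D. length v \<le> r}"
proof -
  define B where "B = Max (D ` {..<r})"
  have "{v \<in> TT D. length v \<le> r} \<subseteq> {xs. set xs \<subseteq> {..<B} \<and> length xs \<le> r}"
  proof
    fix v assume "v \<in> {v \<in> TT D. length v \<le> r}"
    then have v: "v \<in> TT D" "length v \<le> r" by auto
    have "set v \<subseteq> {..<B}"
    proof
    fix x assume "x \<in> set v"
    then obtain j where j: "j < length v" "v ! j = x" by (auto simp: in_set_conv_nth)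
    have "x < D j" using v j by (auto simp: TT_def)
    also have "D j \<le> B" unfolding B_def using j v by (intro Max_ge) auto
    finally show "x \<in> {..<B}" by simp
    qed
    then show "v \<in> {xs. set xs \<subseteq> {..<B} \<and> length xs \<le> r}" using v by simp
  qed
  moreover have "finite {xs. set xs \<subseteq> {..<B} \<and> length xs \<le> r}"
    by (rule finite_lists_length_le) simp
  ultimately show ?thesis by (rule finite_subset)
qed




fun Rn :: "(nat \<Rightarrow> nat) \<Rightarrow> (nat list \<Rightarrow> nat) \<Rightarrow> nat \<Rightarrow> nat list set" where
  "Rn D \<omega> 0 = {[]}"
| "Rn D \<omega> (Suc n) = (\<Union>u\<in>Rn D \<omega> n. cn D \<omega> u)"

lemma Nil_in_cn: "u \<in> TT D \<Longrightarrow> u \<in> cn D \<omega> u" by (auto simp: cn_def)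

lemma Rn_rch: "v \<in> Rn D \<omega> n \<Longrightarrow> rch D \<omega> v"
  by (induction n arbitrary: v) (auto intro: rch.intros)

lemma Rn_TT: "v \<in> Rn D \<omega> n \<Longrightarrow> v \<in> TT D"
  by (induction n arbitrary: v) (auto simp: cn_def)

lemma rch_Rn: "rch D \<omega> v \<Longrightarrow> \<exists>n. v \<in> Rn D \<omega> n"
proof (induction rule: rch.induct)
  case rch0 then show ?case by (intro exI[of _ 0]) simp
next
  case (rchS u v)
  then obtain n where "u \<in> Rn D \<omega> n" by auto
  then show ?case using rchS(2) by (intro exI[of _ "Suc n"]) auto
qed

lemma rch_iff_Rn: "rch D \<omega> v \<longleftrightarrow> (\<exists>n. v \<in> Rn D \<omega> n)"
  using rch_Rn Rn_rch by blast

locale perc =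
  fixes p :: "nat pmf"
begin

abbreviation Om where "Om \<equiv> perc_space p"

lemma space_Om[simp]: "space Om = UNIV"
  by (simp add: perc_space_def space_PiM)

lemma comp_meas[measurable]: "(\<lambda>\<omega>. \<omega> v) \<in> measurable Om (count_space UNIV)"
proof -
  have "(\<lambda>\<omega>. \<omega> v) \<in> measurable Om (measure_pmf p)"
    unfolding perc_space_def by (rule measurable_component_singleton) simp
  then show ?thesis by (simp add: measurable_cong_sets[OF refl sets_measure_pmf_count_space])
qed

lemma sw_meas[measurable]: "sw u \<in> measurable Om Om"
proof -
  have "(\<lambda>\<omega> w. \<omega> (u @ w)) \<in> measurable Om (PiM UNIV (\<lambda>_. measure_pmf p))"
  proof (rule measurable_PiM_single')
    fix w :: "nat list"
    show "(\<lambda>\<omega>. \<omega> (u @ w)) \<in> measurable Om (measure_pmf p)"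
      unfolding perc_space_def by (rule measurable_component_singleton) simp
  qed (simp add: perc_space_def)
  moreover have "sw u = (\<lambda>\<omega> w. \<omega> (u @ w))" by (simp add: fun_eq_iff sw_def)
  ultimately show ?thesis by (simp add: perc_space_def)
qed

lemma pred_cn[measurable]: "Measurable.pred Om (\<lambda>\<omega>. v \<in> cn D \<omega> u)"
proof -
  have "(\<lambda>\<omega>. v \<in> cn D \<omega> u) = (\<lambda>\<omega>. (v \<in> TT D \<and> (\<exists>w. v = u @ w)) \<and> length v - length u \<le> \<omega> u)"
    by (auto simp: cn_def)
  moreover have "Measurable.pred Om (\<lambda>\<omega>. (v \<in> TT D \<and> (\<exists>w. v = u @ w)) \<and> length v - length u \<le> \<omega> u)"
    by measurable
  ultimately show ?thesis by simp
qed

lemma pred_Rn[measurable]: "Measurable.pred Om (\<lambda>\<omega>. v \<in> Rn D \<omega> n)"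
proof (induction n arbitrary: v)
  case 0 then show ?case by simp
next
  case (Suc n)
  have "(\<lambda>\<omega>. v \<in> Rn D \<omega> (Suc n)) = (\<lambda>\<omega>. \<exists>u. u \<in> Rn D \<omega> n \<and> v \<in> cn D \<omega> u)" by auto
  moreover have "Measurable.pred Om (\<lambda>\<omega>. \<exists>u. u \<in> Rn D \<omega> n \<and> v \<in> cn D \<omega> u)"
    using Suc.IH by measurable
  ultimately show ?case by simp
qed

lemma pred_rch[measurable]: "Measurable.pred Om (\<lambda>\<omega>. rch D \<omega> v)"
  unfolding rch_iff_Rn by measurable

lemma surv_sets: "{\<omega>. surv D \<omega>} \<in> sets Om"
proof -
  have "{\<omega>. surv D \<omega>} = (\<Inter>F\<in>{A. finite A}. \<Union>v. {\<omega>. rch D \<omega> v \<and> v \<notin> F})"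
  proof (rule set_eqI, rule iffI)
    fix \<omega> assume "\<omega> \<in> {\<omega>. surv D \<omega>}"
    then have inf: "infinite {v. rch D \<omega> v}" by (simp add: surv_def)
    show "\<omega> \<in> (\<Inter>F\<in>{A. finite A}. \<Union>v. {\<omega>. rch D \<omega> v \<and> v \<notin> F})"
    proof (rule INT_I)
      fix F :: "nat list set" assume "F \<in> {A. finite A}"
      then have "\<not> {v. rch D \<omega> v} \<subseteq> F" using inf finite_subset by auto
      then show "\<omega> \<in> (\<Union>v. {\<omega>. rch D \<omega> v \<and> v \<notin> F})" by auto
    qed
  next
    fix \<omega> assume h: "\<omega> \<in> (\<Inter>F\<in>{A. finite A}. \<Union>v. {\<omega>. rch D \<omega> v \<and> v \<notin> F})"
    show "\<omega> \<in> {\<omega>. surv D \<omega>}"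
    proof (rule ccontr)
      assume "\<omega> \<notin> {\<omega>. surv D \<omega>}"
      then have "finite {v. rch D \<omega> v}" by (simp add: surv_def)
      then have "\<omega> \<in> (\<Union>v. {\<omega>. rch D \<omega> v \<and> v \<notin> {v. rch D \<omega> v}})" using h by blast
      then show False by auto
    qed
  qed
  also have "\<dots> \<in> sets Om"
  proof -
    have key: "(\<Union>v. {\<omega>. rch D \<omega> v \<and> v \<notin> F}) \<in> sets Om" for F :: "nat list set"
    proof -
      have "Measurable.pred Om (\<lambda>\<omega>. \<exists>v. rch D \<omega> v \<and> v \<notin> F)" by measurable
      moreover have "(\<Union>v. {\<omega>. rch D \<omega> v \<and> v \<notin> F}) = {\<omega>\<in>space Om. \<exists>v. rch D \<omega> v \<and> v \<notin> F}" by auto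
      ultimately show ?thesis by (simp add: pred_def)
    qed
    show ?thesis by (intro sets.countable_INT' countable_Collect_finite) (auto simp: key)
  qed
  finally show ?thesis .
qed

lemma pred_surv[measurable]: "Measurable.pred Om (surv D)"
  unfolding pred_def using surv_sets[of D] by simp

lemma pred_En[measurable]: "Measurable.pred Om (En n D)"
proof (induction n arbitrary: D)
  case 0 then show ?case by simp
next
  case (Suc n)
  have "En (Suc n) D = (\<lambda>\<omega>. \<exists>r. \<omega> [] = r \<and> 1 \<le> r \<and> (\<exists>u. u \<in> TT D \<and> length u = r \<and> En n (sh r D) (sw u \<omega>)))"
    by (auto simp: fun_eq_iff)
  moreover have "Measurable.pred Om (\<lambda>\<omega>. \<exists>r. \<omega> [] = r \<and> 1 \<le> r \<and> (\<exists>u. u \<in> TT D \<and> length u = r \<and> En n (sh r D) (sw u \<omega>)))"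
  proof -
    have "\<And>r u. Measurable.pred Om (\<lambda>\<omega>. En n (sh r D) (sw u \<omega>))"
      using Suc.IH measurable_compose[OF sw_meas] by blast
    then show ?thesis by measurable
  qed
  ultimately show ?case by simp
qed

end



sublocale perc \<subseteq> P: prob_space "perc_space p"
  unfolding perc_space_def by (rule prob_space_PiM) (rule prob_space_measure_pmf)

context perc
begin

lemma distr_sw: "distr Om Om (sw u) = Om"
proof -
  have "distr (PiM UNIV (\<lambda>_. measure_pmf p)) (PiM UNIV (\<lambda>i. (\<lambda>_. measure_pmf p) ((@) u i)))
          (\<lambda>\<omega>. \<lambda>n\<in>UNIV. \<omega> ((@) u n)) = PiM UNIV (\<lambda>i. (\<lambda>_. measure_pmf p) ((@) u i))"
    by (rule distr_PiM_reindex) (auto intro: prob_space_measure_pmf simp: inj_def)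
  moreover have "(\<lambda>\<omega>. \<lambda>n\<in>UNIV. \<omega> ((@) u n)) = sw u" by (simp add: fun_eq_iff sw_def)
  ultimately show ?thesis by (simp add: perc_space_def)
qed

lemma prob_sw: "B \<in> sets Om \<Longrightarrow> measure Om (sw u -` B) = measure Om B"
proof -
  assume B: "B \<in> sets Om"
  have "measure Om B = measure (distr Om Om (sw u)) B" by (simp add: distr_sw)
  also have "\<dots> = measure Om (sw u -` B \<inter> space Om)" using B by (intro measure_distr) auto
  finally show ?thesis by simp
qed

lemma indep_prod:
  fixes I :: "'i set" and K :: "'i \<Rightarrow> nat list set" and Y :: "'i \<Rightarrow> (nat list \<Rightarrow> nat) set"
  assumes fin: "finite I" and ne: "I \<noteq> {}" and disj: "disjoint_family_on K I"
    and Ys: "\<And>i. i \<in> I \<Longrightarrow> Y i \<in> sets Om"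
    and dep: "\<And>i \<omega> \<omega>'. i \<in> I \<Longrightarrow> (\<And>j. j \<in> K i \<Longrightarrow> \<omega> j = \<omega>' j) \<Longrightarrow> \<omega> \<in> Y i \<Longrightarrow> \<omega>' \<in> Y i"
  shows "measure Om (\<Inter>i\<in>I. Y i) = (\<Prod>i\<in>I. measure Om (Y i))"
proof -
  let ?mp = "measure_pmf p"
  have rv: "(\<lambda>\<omega>. \<omega> i) \<in> measurable Om ?mp" for i
    unfolding perc_space_def by (rule measurable_component_singleton) simp
  have iv: "P.indep_vars (\<lambda>_. ?mp) (\<lambda>i \<omega>. \<omega> i) UNIV"
  proof (subst P.indep_vars_iff_distr_eq_PiM)
    show "UNIV \<noteq> {}" by simp
    show "P.random_variable ?mp (\<lambda>\<omega>. \<omega> i)" for i using rv .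
    have "distr Om ?mp (\<lambda>\<omega>. \<omega> i) = ?mp" for i
      unfolding perc_space_def by (rule distr_PiM_component) (auto intro: prob_space_measure_pmf)
    moreover have "\<And>x :: nat list \<Rightarrow> nat. restrict x UNIV = x" by (simp add: fun_eq_iff)
    ultimately show "distr Om (Pi\<^sub>M UNIV (\<lambda>_. ?mp)) (\<lambda>x. \<lambda>i\<in>UNIV. x i) = Pi\<^sub>M UNIV (\<lambda>i. distr Om ?mp (\<lambda>\<omega>. \<omega> i))"
      by (simp add: perc_space_def)
  qed
  have iv2: "P.indep_vars (\<lambda>j. PiM (K j) (\<lambda>_. ?mp)) (\<lambda>j \<omega>. restrict (\<lambda>i. \<omega> i) (K j)) I"
    by (rule P.indep_vars_restrict[OF iv]) (use disj in auto)
  define ext where "ext j f = (\<lambda>v. if v \<in> K j then f v else 0)" for j and f :: "nat list \<Rightarrow> nat"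
  define B where "B j = ext j -` Y j \<inter> space (PiM (K j) (\<lambda>_. ?mp))" for j
  have extm: "ext j \<in> measurable (PiM (K j) (\<lambda>_. ?mp)) Om" for j
  proof -
    have "(\<lambda>f v. if v \<in> K j then f v else 0) \<in> measurable (PiM (K j) (\<lambda>_. ?mp)) (PiM UNIV (\<lambda>_. ?mp))"
    proof (rule measurable_PiM_single')
      fix v :: "nat list"
      show "(\<lambda>f. if v \<in> K j then f v else 0) \<in> measurable (PiM (K j) (\<lambda>_. ?mp)) ?mp"
      proof (cases "v \<in> K j")
        case True
        have "(\<lambda>f. f v) \<in> measurable (PiM (K j) (\<lambda>_. ?mp)) ?mp"
          by (rule measurable_component_singleton[OF True])
        then show ?thesis using True by simp
      next
        case False then show ?thesis by simp
      qed
    qed simp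
    then show ?thesis by (simp add: ext_def[abs_def] perc_space_def)
  qed
  have Bs: "B j \<in> sets (PiM (K j) (\<lambda>_. ?mp))" if "j \<in> I" for j
    unfolding B_def using measurable_sets[OF extm Ys[OF that]] .
  have YB: "Y j = (\<lambda>\<omega>. restrict (\<lambda>i. \<omega> i) (K j)) -` B j \<inter> space Om" if j: "j \<in> I" for j
  proof (intro set_eqI iffI)
    fix \<omega> assume w: "\<omega> \<in> Y j"
    have "ext j (restrict \<omega> (K j)) \<in> Y j"
      by (rule dep[OF j _ w]) (simp add: ext_def)
    moreover have "restrict \<omega> (K j) \<in> space (PiM (K j) (\<lambda>_. ?mp))" by (simp add: space_PiM)
    ultimately show "\<omega> \<in> (\<lambda>\<omega>. restrict (\<lambda>i. \<omega> i) (K j)) -` B j \<inter> space Om" by (simp add: B_def)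
  next
    fix \<omega> assume "\<omega> \<in> (\<lambda>\<omega>. restrict (\<lambda>i. \<omega> i) (K j)) -` B j \<inter> space Om"
    then have w: "ext j (restrict \<omega> (K j)) \<in> Y j" by (simp add: B_def)
    show "\<omega> \<in> Y j"
      by (rule dep[OF j _ w]) (simp add: ext_def)
  qed
  have "measure Om (\<Inter>i\<in>I. Y i) = measure Om (\<Inter>i\<in>I. (\<lambda>\<omega>. restrict (\<lambda>i. \<omega> i) (K i)) -` B i \<inter> space Om)"
    using YB by (intro arg_cong[where f="measure Om"] INF_cong) auto
  also have "\<dots> = (\<Prod>i\<in>I. measure Om ((\<lambda>\<omega>. restrict (\<lambda>i. \<omega> i) (K i)) -` B i \<inter> space Om))"
    by (rule P.indep_varsD_finite[OF iv2 ne fin Bs])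
  also have "\<dots> = (\<Prod>i\<in>I. measure Om (Y i))"
    using YB by (intro prod.cong) auto
  finally show ?thesis .
qed

end



definition LL :: "(nat \<Rightarrow> nat) \<Rightarrow> nat \<Rightarrow> nat list set" where
  "LL D r = {u \<in> TT D. length u = r}"

lemma LL_Suc: "LL D (Suc r) = (\<lambda>(u, x). u @ [x]) ` (LL D r \<times> {..<D r})"
proof (intro set_eqI iffI)
  fix v assume "v \<in> LL D (Suc r)"
  then have v: "v \<in> TT D" "length v = Suc r" by (auto simp: LL_def)
  then obtain u x where ux: "v = u @ [x]" by (metis length_Suc_conv_rev)
  then have "length u = r" using v by simp
  moreover have "u \<in> TT D" "[x] \<in> TT (sh (length u) D)" using v(1) ux TT_append by auto
  ultimately show "v \<in> (\<lambda>(u, x). u @ [x]) ` (LL D r \<times> {..<D r})"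
    using ux by (auto simp: LL_def TT_def sh_def intro!: image_eqI[of _ _ "(u, x)"])
next
  fix v assume "v \<in> (\<lambda>(u, x). u @ [x]) ` (LL D r \<times> {..<D r})"
  then obtain u x where ux: "v = u @ [x]" "u \<in> TT D" "length u = r" "x < D r" by (auto simp: LL_def)
  then have "[x] \<in> TT (sh (length u) D)" by (auto simp: TT_def sh_def)
  then show "v \<in> LL D (Suc r)" using ux TT_append by (auto simp: LL_def)
qed

lemma card_LL: "card (LL D r) = (\<Prod>t<r. D t)" and finite_LL: "finite (LL D r)"
proof -
  have "card (LL D r) = (\<Prod>t<r. D t) \<and> finite (LL D r)"
  proof (induction r)
    case 0
    have "LL D 0 = {[]}" by (auto simp: LL_def)
    then show ?case by simp
  next
    case (Suc r)
    have inj: "inj_on (\<lambda>(u, x). u @ [x]) (LL D r \<times> {..<D r})" by (auto simp: inj_on_def)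
    show ?case unfolding LL_Suc using Suc inj by (simp add: card_image card_cartesian_product)
  qed
  then show "card (LL D r) = (\<Prod>t<r. D t)" "finite (LL D r)" by auto
qed

lemma LL_ne: "u \<in> LL D r \<Longrightarrow> 1 \<le> r \<Longrightarrow> u \<noteq> []" by (auto simp: LL_def)

context perc
begin

lemma prob_coord: "measure Om {\<omega>. \<omega> v = r} = pmf p r"
proof -
  have d: "distr Om (measure_pmf p) (\<lambda>\<omega>. \<omega> v) = measure_pmf p"
    unfolding perc_space_def by (rule distr_PiM_component) (auto intro: prob_space_measure_pmf)
  have m: "(\<lambda>\<omega>. \<omega> v) \<in> measurable Om (measure_pmf p)"
    unfolding perc_space_def by (rule measurable_component_singleton) simp
  have "pmf p r = measure (distr Om (measure_pmf p) (\<lambda>\<omega>. \<omega> v)) {r}" by (simp add: d measure_pmf_single)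
  also have "\<dots> = measure Om ((\<lambda>\<omega>. \<omega> v) -` {r} \<inter> space Om)" by (rule measure_distr[OF m]) simp
  finally show ?thesis by (simp add: vimage_def)
qed

lemma coord_sets[measurable]: "{\<omega>. \<omega> v = r} \<in> sets Om"
proof -
  have "Measurable.pred Om (\<lambda>\<omega>. \<omega> v = r)" by measurable
  then show ?thesis by (simp add: pred_def)
qed

lemma pmf_sums: "(\<lambda>r. pmf p r) sums 1"
proof -
  have "(\<lambda>r. measure Om {\<omega>. \<omega> [] = r}) sums measure Om (\<Union>r. {\<omega>. \<omega> [] = r})"
    by (rule P.finite_measure_UNION) (auto simp: disjoint_family_on_def)
  moreover have "(\<Union>r. {\<omega>. \<omega> [] = r}) = space Om" by auto
  moreover have "measure Om (space Om) = 1" by (rule P.prob_space)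
  ultimately show ?thesis by (simp add: prob_coord)
qed

lemma sets_sw_pre: "E \<in> sets Om \<Longrightarrow> sw u -` E \<in> sets Om"
  using measurable_sets[OF sw_meas] by (metis Int_UNIV_right space_Om)

lemma rec_I:
  assumes E: "E \<in> sets Om" and r1: "1 \<le> r"
  shows "measure Om ({\<omega>. \<omega> [] = r} \<inter> (\<Inter>u\<in>LL D r. sw u -` E)) = pmf p r * measure Om E ^ card (LL D r)"
proof -
  define K where "K v = (if v = [] then {[]} else range ((@) v))" for v :: "nat list"
  define Y where "Y v = (if v = [] then {\<omega>. \<omega> [] = r} else sw v -` E)" for v :: "nat list"
  have nin: "[] \<notin> LL D r" using r1 by (auto simp: LL_def)
  have "measure Om (\<Inter>v\<in>insert [] (LL D r). Y v) = (\<Prod>v\<in>insert [] (LL D r). measure Om (Y v))"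
  proof (rule indep_prod[where K=K])
    show "finite (insert [] (LL D r))" using finite_LL by simp
    show "insert [] (LL D r) \<noteq> {}" by simp
    show "disjoint_family_on K (insert [] (LL D r))"
      unfolding disjoint_family_on_def
    proof (intro ballI impI)
      fix a b assume ab: "a \<in> insert [] (LL D r)" "b \<in> insert [] (LL D r)" "a \<noteq> b"
      show "K a \<inter> K b = {}"
      proof (cases "a = []")
        case True then have "b \<noteq> []" using ab by auto
        then show ?thesis using True by (auto simp: K_def)
      next
        case False
        show ?thesis
        proof (cases "b = []")
          case True then show ?thesis using False by (auto simp: K_def)
        next
          case bF: False
          have "length a = length b" using ab False bF by (auto simp: LL_def)
          then show ?thesis using False bF ab(3) by (auto simp: K_def)
        qed
      qed
    qed
    show "Y v \<in> sets Om" if "v \<in> insert [] (LL D r)" for v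
      using E by (auto simp: Y_def sets_sw_pre)
    show "\<omega>' \<in> Y v" if "v \<in> insert [] (LL D r)" "\<And>j. j \<in> K v \<Longrightarrow> \<omega> j = \<omega>' j" "\<omega> \<in> Y v"
      for v \<omega> \<omega>'
    proof (cases "v = []")
      case True then show ?thesis using that by (auto simp: Y_def K_def)
    next
      case False
      then have "sw v \<omega> = sw v \<omega>'" using that(2) by (auto simp: sw_def K_def fun_eq_iff)
      then show ?thesis using that(3) False by (simp add: Y_def)
    qed
  qed
  moreover have "(\<Inter>v\<in>insert [] (LL D r). Y v) = {\<omega>. \<omega> [] = r} \<inter> (\<Inter>u\<in>LL D r. sw u -` E)"
    using nin by (auto simp: Y_def split: if_splits)
  moreover have "(\<Prod>v\<in>insert [] (LL D r). measure Om (Y v)) = pmf p r * measure Om E ^ card (LL D r)"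
  proof -
    have "(\<Prod>v\<in>insert [] (LL D r). measure Om (Y v)) = measure Om (Y []) * (\<Prod>v\<in>LL D r. measure Om (Y v))"
      using nin finite_LL by simp
    also have "(\<Prod>v\<in>LL D r. measure Om (Y v)) = (\<Prod>v\<in>LL D r. measure Om E)"
      using nin E by (intro prod.cong) (auto simp: Y_def prob_sw)
    finally show ?thesis by (simp add: Y_def prob_coord)
  qed
  ultimately show ?thesis by simp
qed


lemma pred_En_sw[measurable]: "Measurable.pred Om (\<lambda>\<omega>. En n D (sw u \<omega>))"
  using pred_En measurable_compose[OF sw_meas] by blast

lemma En_sets[measurable]: "{\<omega>. En n D \<omega>} \<in> sets Om"
  using pred_En[of n D] by (simp add: pred_def)

lemma notEn_sets[measurable]: "{\<omega>. \<not> En n D \<omega>} \<in> sets Om"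
proof -
  have "Measurable.pred Om (\<lambda>\<omega>. \<not> En n D \<omega>)" by measurable
  then show ?thesis by (simp add: pred_def)
qed

lemma notEn_Suc_sums:
  "(\<lambda>r. if r = 0 then pmf p 0 else measure Om ({\<omega>. \<omega> [] = r} \<inter> (\<Inter>u\<in>LL D r. sw u -` {\<omega>. \<not> En n (sh r D) \<omega>})))
     sums measure Om {\<omega>. \<not> En (Suc n) D \<omega>}"
proof -
  define A where "A r = {\<omega>. \<omega> [] = r \<and> (r = 0 \<or> (\<forall>u\<in>LL D r. \<not> En n (sh r D) (sw u \<omega>)))}" for r
  have As: "A r \<in> sets Om" for r
  proof -
    have "Measurable.pred Om (\<lambda>\<omega>. \<omega> [] = r \<and> (r = 0 \<or> (\<forall>u\<in>LL D r. \<not> En n (sh r D) (sw u \<omega>))))"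
      by measurable
    then show ?thesis by (simp add: pred_def A_def)
  qed
  have "(\<lambda>r. measure Om (A r)) sums measure Om (\<Union>r. A r)"
  proof (rule P.finite_measure_UNION)
    show "range A \<subseteq> P.events" using As by blast
    show "disjoint_family A" by (auto simp: disjoint_family_on_def A_def)
  qed
  moreover have "(\<Union>r. A r) = {\<omega>. \<not> En (Suc n) D \<omega>}"
    by (auto simp: A_def LL_def)
  moreover have "measure Om (A r) = (if r = 0 then pmf p 0 else measure Om ({\<omega>. \<omega> [] = r} \<inter> (\<Inter>u\<in>LL D r. sw u -` {\<omega>. \<not> En n (sh r D) \<omega>})))" for r
  proof (cases "r = 0")
    case True
    then have "A r = {\<omega>. \<omega> [] = 0}" by (auto simp: A_def)
    then show ?thesis using True by (simp add: prob_coord)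
  next
    case False
    then have "A r = {\<omega>. \<omega> [] = r} \<inter> (\<Inter>u\<in>LL D r. sw u -` {\<omega>. \<not> En n (sh r D) \<omega>})"
      by (auto simp: A_def)
    then show ?thesis using False by simp
  qed
  ultimately show ?thesis by simp
qed

lemma surv_I:
  fixes D :: "nat \<Rightarrow> nat" and Mn :: "nat \<Rightarrow> nat" and z :: real
  assumes Mn: "\<And>m r. 1 \<le> r \<Longrightarrow> Mn r \<le> (\<Prod>t<r. D (t + m))"
    and z: "0 \<le> z" "z < 1"
    and g: "(\<Sum>r. pmf p r * (if r = 0 then 1 else z ^ Mn r)) \<le> z"
  shows "1 - z \<le> measure Om {\<omega>. surv D \<omega>}"
proof -
  define g where "g r = pmf p r * (if r = 0 then 1 else z ^ Mn r)" for r
  have g0: "0 \<le> g r" for r using z by (simp add: g_def)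
  have gle: "g r \<le> pmf p r" for r
  proof (cases "r = 0")
    case False
    have "z ^ Mn r \<le> 1" using z by (simp add: power_le_one)
    then show ?thesis using False by (simp add: g_def mult_left_le)
  qed (simp add: g_def)
  have sg: "summable g"
    by (rule summable_comparison_test[OF _ sums_summable[OF pmf_sums]]) (use g0 gle in auto)
  have main: "measure Om {\<omega>. \<not> En n (sh m D) \<omega>} \<le> z" for n m
  proof (induction n arbitrary: m)
    case 0 then show ?case using z by simp
  next
    case (Suc n)
    define f where "f r = (if r = 0 then pmf p 0 else measure Om ({\<omega>. \<omega> [] = r} \<inter> (\<Inter>u\<in>LL (sh m D) r. sw u -` {\<omega>. \<not> En n (sh r (sh m D)) \<omega>})))" for r
    have fs: "f sums measure Om {\<omega>. \<not> En (Suc n) (sh m D) \<omega>}"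
      unfolding f_def by (rule notEn_Suc_sums)
    have fg: "f r \<le> g r" for r
    proof (cases "r = 0")
      case True then show ?thesis by (simp add: f_def g_def)
    next
      case False
      define e where "e = measure Om {\<omega>. \<not> En n (sh (r + m) D) \<omega>}"
      have e: "0 \<le> e" "e \<le> z" using Suc.IH[of "r + m"] by (auto simp: e_def)
      have c: "Mn r \<le> card (LL (sh m D) r)" using Mn[of r m] False by (simp add: card_LL sh_def)
      have "f r = pmf p r * e ^ card (LL (sh m D) r)"
      proof -
        have "1 \<le> r" using False by simp
        from rec_I[where E="{\<omega>. \<not> En n (sh (r + m) D) \<omega>}" and r=r and D="sh m D", OF notEn_sets this]
        show ?thesis unfolding f_def e_def using False by simp
      qed
      also have "\<dots> \<le> pmf p r * z ^ card (LL (sh m D) r)"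
        using e by (intro mult_left_mono power_mono) auto
      also have "\<dots> \<le> pmf p r * z ^ Mn r"
        using z c by (intro mult_left_mono power_decreasing) auto
      finally show ?thesis using False by (simp add: g_def)
    qed
    have "measure Om {\<omega>. \<not> En (Suc n) (sh m D) \<omega>} \<le> suminf g"
      using sums_le[OF fg fs summable_sums[OF sg]] .
    also have "suminf g = (\<Sum>r. pmf p r * (if r = 0 then 1 else z ^ Mn r))"
      by (rule arg_cong[where f=suminf], rule ext) (simp add: g_def)
    also have "\<dots> \<le> z" using g .
    finally show ?case .
  qed
  have low: "1 - z \<le> measure Om {\<omega>. En n D \<omega>}" for n
  proof -
    have "measure Om {\<omega>. \<not> En n D \<omega>} \<le> z" using main[of n 0] by simp
    moreover have "{\<omega>. \<not> En n D \<omega>} = space Om - {\<omega>. En n D \<omega>}" by auto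
    ultimately show ?thesis using P.prob_compl[OF En_sets[of n D]] by simp
  qed
  have dec: "decseq (\<lambda>n. {\<omega>. En n D \<omega>})"
  proof (rule decseq_SucI)
    show "{\<omega>. En (Suc n) D \<omega>} \<subseteq> {\<omega>. En n D \<omega>}" for n using En_Suc_imp by blast
  qed
  have lim: "(\<lambda>n. measure Om {\<omega>. En n D \<omega>}) \<longlonglongrightarrow> measure Om (\<Inter>n. {\<omega>. En n D \<omega>})"
    by (rule P.finite_Lim_measure_decseq) (auto simp: dec)
  have "1 - z \<le> measure Om (\<Inter>n. {\<omega>. En n D \<omega>})"
    by (rule LIMSEQ_le_const[OF lim]) (use low in auto)
  also have "\<dots> \<le> measure Om {\<omega>. surv D \<omega>}"
    by (rule P.finite_measure_mono) (auto intro: En_surv surv_sets)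
  finally show ?thesis .
qed

end



definition CC :: "(nat \<Rightarrow> nat) \<Rightarrow> nat \<Rightarrow> nat list set" where
  "CC D r = {u \<in> TT D. 1 \<le> length u \<and> length u \<le> r}"

lemma finite_CC: "finite (CC D r)"
  by (rule finite_subset[OF _ finite_TT_le[of D r]]) (auto simp: CC_def)

lemma CC_UN: "CC D r = (\<Union>l\<in>{1..r}. LL D l)"
  by (auto simp: CC_def LL_def)

lemma card_CC: "card (CC D r) = (\<Sum>l=1..r. \<Prod>t<l. D t)"
proof -
  have "card (CC D r) = (\<Sum>l\<in>{1..r}. card (LL D l))"
    unfolding CC_UN by (rule card_UN_disjoint) (simp_all add: finite_LL, auto simp: LL_def)
  then show ?thesis by (simp add: card_LL)
qed

lemma surv_split:
  assumes "surv D \<omega>"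
  shows "1 \<le> \<omega> [] \<and> (\<exists>u\<in>CC D (\<omega> []). surv (sh (length u) D) (sw u \<omega>))"
proof (rule ccontr)
  assume neg: "\<not> (1 \<le> \<omega> [] \<and> (\<exists>u\<in>CC D (\<omega> []). surv (sh (length u) D) (sw u \<omega>)))"
  have fin: "finite {w. rch (sh (length u) D) (sw u \<omega>) w}" if "u \<in> cn D \<omega> []" "u \<noteq> []" for u
  proof -
    have "u \<in> CC D (\<omega> [])" using that by (auto simp: CC_def cn_Nil Suc_le_eq)
    then have "1 \<le> \<omega> []" by (auto simp: CC_def)
    then show ?thesis using neg \<open>u \<in> CC D (\<omega> [])\<close> by (auto simp: surv_def)
  qed
  have fcn: "finite (cn D \<omega> [])" unfolding cn_Nil by (rule finite_TT_le)
  have "{v. rch D \<omega> v} \<subseteq> cn D \<omega> [] \<union> (\<Union>u\<in>cn D \<omega> [] - {[]}. (\<lambda>w. u @ w) ` {w. rch (sh (length u) D) (sw u \<omega>) w})"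
    using rch_gen[of D \<omega>] by blast
  moreover have "finite (cn D \<omega> [] \<union> (\<Union>u\<in>cn D \<omega> [] - {[]}. (\<lambda>w. u @ w) ` {w. rch (sh (length u) D) (sw u \<omega>) w}))"
    using fcn fin by auto
  ultimately have "finite {v. rch D \<omega> v}" by (rule finite_subset)
  then show False using assms by (simp add: surv_def)
qed

context perc
begin

lemma surv_sw_sets: "sw u -` {\<omega>. surv D \<omega>} \<in> sets Om"
  by (rule sets_sw_pre[OF surv_sets])

lemma prob_surv_sw: "measure Om (sw u -` {\<omega>. surv D \<omega>}) = measure Om {\<omega>. surv D \<omega>}"
  by (rule prob_sw[OF surv_sets])

lemma indep2:
  assumes "A \<in> sets Om" "B \<in> sets Om" "Ka \<inter> Kb = {}"
    and "\<And>\<omega> \<omega>'. (\<And>j. j \<in> Ka \<Longrightarrow> \<omega> j = \<omega>' j) \<Longrightarrow> \<omega> \<in> A \<Longrightarrow> \<omega>' \<in> A"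
    and "\<And>\<omega> \<omega>'. (\<And>j. j \<in> Kb \<Longrightarrow> \<omega> j = \<omega>' j) \<Longrightarrow> \<omega> \<in> B \<Longrightarrow> \<omega>' \<in> B"
  shows "measure Om (A \<inter> B) = measure Om A * measure Om B"
proof -
  define K where "K b = (if b then Ka else Kb)" for b :: bool
  define Y where "Y b = (if b then A else B)" for b :: bool
  have "measure Om (\<Inter>b\<in>UNIV. Y b) = (\<Prod>b\<in>UNIV. measure Om (Y b))"
  proof (rule indep_prod[where K=K])
    show "disjoint_family_on K UNIV" using assms(3) by (auto simp: disjoint_family_on_def K_def)
    show "Y b \<in> sets Om" if "b \<in> UNIV" for b using assms(1,2) by (simp add: Y_def)
    show "\<omega>' \<in> Y b" if "b \<in> UNIV" "\<And>j. j \<in> K b \<Longrightarrow> \<omega> j = \<omega>' j" "\<omega> \<in> Y b" for b \<omega> \<omega>'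
    proof (cases b)
      case True
      have h1: "\<And>j. j \<in> Ka \<Longrightarrow> \<omega> j = \<omega>' j" using that(2) True by (simp add: K_def)
      have h2: "\<omega> \<in> A" using that(3) True by (simp add: Y_def)
      show ?thesis unfolding Y_def using True assms(4)[OF h1 h2] by simp
    next
      case False
      have h1: "\<And>j. j \<in> Kb \<Longrightarrow> \<omega> j = \<omega>' j" using that(2) False by (simp add: K_def)
      have h2: "\<omega> \<in> B" using that(3) False by (simp add: Y_def)
      show ?thesis unfolding Y_def using False assms(5)[OF h1 h2] by simp
    qed
  qed auto
  moreover have "(\<Inter>b\<in>UNIV. Y b) = A \<inter> B" by (auto simp: Y_def)
  moreover have "(\<Prod>b\<in>UNIV. measure Om (Y b)) = measure Om A * measure Om B"
    by (simp add: Y_def UNIV_bool)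
  ultimately show ?thesis by simp
qed

lemma sw_dep: "u \<noteq> [] \<Longrightarrow> (\<And>j. j \<in> K \<Longrightarrow> \<omega> j = \<omega>' j) \<Longrightarrow> range ((@) u) \<subseteq> K \<Longrightarrow> sw u \<omega> = sw u \<omega>'"
  by (auto simp: sw_def fun_eq_iff)


lemma key_II:
  fixes D :: "nat \<Rightarrow> nat" and x E :: real and S :: "nat \<Rightarrow> real"
  assumes D2: "\<And>t. 2 \<le> D t"
    and xb: "\<And>l. measure Om {\<omega>. surv (sh l D) \<omega>} \<le> x"
    and S: "\<And>r. 1 \<le> r \<Longrightarrow> real (card (CC D r)) \<le> S r"
    and Es: "(\<lambda>r. pmf p r * S r) sums E" and E1: "E \<le> 1" and S0: "0 \<le> S 0"
  shows "measure Om {\<omega>. surv D \<omega>} \<le> (1 - pmf p 0) * (2 * measure Om {\<omega>. surv (sh 1 D) \<omega>}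
            - (measure Om {\<omega>. surv (sh 1 D) \<omega>})^2 - 2 * x) + x"
proof -
  define y where "y = measure Om {\<omega>. surv (sh 1 D) \<omega>}"
  define c where "c = 2 * y - y^2 - 2 * x"
  define A where "A u = sw u -` {\<omega>. surv (sh (length u) D) \<omega>}" for u
  define U where "U r = (\<Union>u\<in>CC D r. A u)" for r
  define X where "X r = {\<omega>. \<omega> [] = r} \<inter> (if r = 0 then {} else U r)" for r
  define h where "h r = pmf p r * c + x * (pmf p r * S r) - (if r = 0 then pmf p 0 * c + x * (pmf p 0 * S 0) else 0)" for r
  have x0: "0 \<le> x" using xb[of 0] measure_nonneg[of Om] by (meson order_trans)
  have As: "A u \<in> sets Om" for u unfolding A_def by (rule surv_sw_sets)
  have PA: "measure Om (A u) = measure Om {\<omega>. surv (sh (length u) D) \<omega>}" for u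
    unfolding A_def by (rule prob_surv_sw)
  have Us: "U r \<in> sets Om" for r unfolding U_def using As finite_CC by auto
  have Xs: "X r \<in> sets Om" for r unfolding X_def using Us coord_sets by auto
  have sub: "{\<omega>. surv D \<omega>} \<subseteq> (\<Union>r. X r)"
  proof
    fix \<omega> assume "\<omega> \<in> {\<omega>. surv D \<omega>}"
    then have "1 \<le> \<omega> [] \<and> (\<exists>u\<in>CC D (\<omega> []). surv (sh (length u) D) (sw u \<omega>))" using surv_split by simp
    then have "\<omega> \<in> X (\<omega> [])" by (auto simp: X_def U_def A_def)
    then show "\<omega> \<in> (\<Union>r. X r)" by blast
  qed
  have Xsum: "(\<lambda>r. measure Om (X r)) sums measure Om (\<Union>r. X r)"
  proof (rule P.finite_measure_UNION)
    show "range X \<subseteq> P.events" using Xs by blast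
    show "disjoint_family X" by (auto simp: disjoint_family_on_def X_def)
  qed
  have Xh: "measure Om (X r) \<le> h r" for r
  proof (cases "r = 0")
    case True then show ?thesis by (simp add: X_def h_def)
  next
    case False
    then have r1: "1 \<le> r" by simp
    have "X r = {\<omega>. \<omega> [] = r} \<inter> U r" using False by (simp add: X_def)
    then have mX: "measure Om (X r) = pmf p r * measure Om (U r)"
    proof (simp only:, subst indep2[where Ka="{[]}" and Kb="- {[]}"])
      show "{\<omega>. \<omega> [] = r} \<in> sets Om" by (rule coord_sets)
      show "U r \<in> sets Om" by (rule Us)
      show "{[]} \<inter> - {[]} = {}" by simp
      show "\<omega>' \<in> {\<omega>. \<omega> [] = r}" if "\<And>j. j \<in> {[]} \<Longrightarrow> \<omega> j = \<omega>' j" "\<omega> \<in> {\<omega>. \<omega> [] = r}" for \<omega> \<omega>'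
        using that by auto
      show "\<omega>' \<in> U r" if ag: "\<And>j. j \<in> - {[]} \<Longrightarrow> \<omega> j = \<omega>' j" and w: "\<omega> \<in> U r" for \<omega> \<omega>'
      proof -
        from w obtain u where u: "u \<in> CC D r" "\<omega> \<in> A u" by (auto simp: U_def)
        have "u \<noteq> []" using u by (auto simp: CC_def)
        have "range ((@) u) \<subseteq> - {[]}" using \<open>u \<noteq> []\<close> by auto
        have "sw u \<omega> = sw u \<omega>'" using ag \<open>u \<noteq> []\<close> by (auto simp: sw_def fun_eq_iff)
        then have "\<omega>' \<in> A u" using u(2) by (simp add: A_def)
        then show ?thesis using u(1) by (auto simp: U_def)
      qed
    qed (simp add: prob_coord)
    have in0: "[0] \<in> CC D r" and in1: "[1] \<in> CC D r"
      using r1 D2[of 0] by (auto simp: CC_def TT_def)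
    have "U r = (A [0] \<union> A [1]) \<union> (\<Union>u\<in>CC D r - {[0], [1]}. A u)"
      using in0 in1 by (auto simp: U_def)
    then have "measure Om (U r) \<le> measure Om (A [0] \<union> A [1]) + measure Om (\<Union>u\<in>CC D r - {[0], [1]}. A u)"
      using As by (simp add: measure_Un_le sets.Un)
    also have "measure Om (A [0] \<union> A [1]) = y + y - y * y"
    proof -
      have "measure Om (A [0] \<union> A [1]) = measure Om (A [0]) + measure Om (A [1]) - measure Om (A [0] \<inter> A [1])"
        by (rule measure_Un3) (auto simp: As P.fmeasurable_eq_sets)
      moreover have "measure Om (A [0] \<inter> A [1]) = measure Om (A [0]) * measure Om (A [1])"
      proof (rule indep2[where Ka="range ((@) [0])" and Kb="range ((@) [1])"])
        show "A [0] \<in> sets Om" "A [1] \<in> sets Om" by (rule As)+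
        show "range ((@) [0::nat]) \<inter> range ((@) [1]) = {}" by auto
        show "\<omega>' \<in> A [0]" if "\<And>j. j \<in> range ((@) [0]) \<Longrightarrow> \<omega> j = \<omega>' j" "\<omega> \<in> A [0]" for \<omega> \<omega>'
          using sw_dep[of "[0]" "range ((@) [0])" \<omega> \<omega>'] that by (auto simp: A_def)
        show "\<omega>' \<in> A [1]" if "\<And>j. j \<in> range ((@) [1]) \<Longrightarrow> \<omega> j = \<omega>' j" "\<omega> \<in> A [1]" for \<omega> \<omega>'
          using sw_dep[of "[1]" "range ((@) [1])" \<omega> \<omega>'] that by (auto simp: A_def)
      qed
      moreover have "measure Om (A [0]) = y" "measure Om (A [1]) = y" by (simp_all add: PA y_def)
      ultimately show ?thesis by simp
    qed
    also have "measure Om (\<Union>u\<in>CC D r - {[0], [1]}. A u) \<le> (\<Sum>u\<in>CC D r - {[0], [1]}. measure Om (A u))"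
      by (rule measure_UNION_le) (auto simp: finite_CC As)
    also have "\<dots> \<le> (\<Sum>u\<in>CC D r - {[0], [1]}. x)"
      by (rule sum_mono) (simp add: PA xb)
    also have "\<dots> = x * (real (card (CC D r)) - 2)"
    proof -
      have "card (CC D r - {[0], [1]}) = card (CC D r) - 2"
        using in0 in1 finite_CC by (simp add: card_Diff_subset)
      moreover have "card (CC D r) \<ge> 2"
      proof -
        have "{[0], [1]} \<subseteq> CC D r" using in0 in1 by auto
        then have "card {[0::nat], [1]} \<le> card (CC D r)" using finite_CC by (rule card_mono[rotated])
        then show ?thesis by simp
      qed
      ultimately show ?thesis by (simp add: of_nat_diff algebra_simps)
    qed
    also have "\<dots> \<le> x * (S r - 2)" using S[OF r1] x0 by (intro mult_left_mono) auto
    finally have "measure Om (U r) \<le> c + x * S r" by (simp add: c_def power2_eq_square algebra_simps)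
    then have "pmf p r * measure Om (U r) \<le> pmf p r * (c + x * S r)" by (intro mult_left_mono) auto
    then show ?thesis using mX False by (simp add: h_def algebra_simps)
  qed
  have hs: "h sums (c + x * E - (pmf p 0 * c + x * (pmf p 0 * S 0)))"
  proof -
    have "(\<lambda>r. pmf p r * c + x * (pmf p r * S r)) sums (1 * c + x * E)"
      by (intro sums_add sums_mult2[OF pmf_sums] sums_mult[OF Es])
    moreover have "(\<lambda>r. if r = 0 then pmf p 0 * c + x * (pmf p 0 * S 0) else 0) sums (pmf p 0 * c + x * (pmf p 0 * S 0))"
      using sums_single[of 0 "\<lambda>_. pmf p 0 * c + x * (pmf p 0 * S 0)"] by simp
    ultimately show ?thesis unfolding h_def[abs_def] by (simp add: sums_diff)
  qed
  have "measure Om {\<omega>. surv D \<omega>} \<le> measure Om (\<Union>r. X r)"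
    by (rule P.finite_measure_mono[OF sub]) (use Xs in blast)
  also have "\<dots> \<le> c + x * E - (pmf p 0 * c + x * (pmf p 0 * S 0))"
    by (rule sums_le[OF Xh Xsum hs])
  also have "\<dots> \<le> (1 - pmf p 0) * c + x"
  proof -
    have "x * E \<le> x" using x0 E1 by (simp add: mult_left_le)
    moreover have "0 \<le> x * (pmf p 0 * S 0)" using x0 S0 by simp
    ultimately show ?thesis by (simp add: algebra_simps)
  qed
  finally show ?thesis by (simp add: c_def y_def)
qed


lemma surv_II:
  fixes D :: "nat \<Rightarrow> nat" and k :: nat and E :: real and S :: "nat \<Rightarrow> real"
  assumes k1: "1 \<le> k" and per: "\<And>m. sh m D = sh (m mod k) D" and D2: "\<And>t. 2 \<le> D t"
    and S: "\<And>m r. 1 \<le> r \<Longrightarrow> (\<Sum>l=1..r. real (\<Prod>t<l. D (t + m))) \<le> S r"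
    and Es: "(\<lambda>r. pmf p r * S r) sums E" and E1: "E \<le> 1" and S0: "0 \<le> S 0"
    and p0: "pmf p 0 < 1"
  shows "measure Om {\<omega>. surv D \<omega>} = 0"
proof -
  define F where "F l = measure Om {\<omega>. surv (sh l D) \<omega>}" for l
  define x where "x = Max (F ` {..<k})"
  have "0 \<in> {..<k}" using k1 by simp
  then have ne: "F ` {..<k} \<noteq> {}" by blast
  have Fx: "F l \<le> x" for l
  proof -
    have "F l = F (l mod k)" by (simp add: F_def per[of l])
    also have "\<dots> \<le> x" unfolding x_def using k1 by (intro Max_ge) auto
    finally show ?thesis .
  qed
  obtain m where m: "m < k" "F m = x" using Max_in[OF _ ne] x_def by auto
  have "F m \<le> (1 - pmf p 0) * (2 * measure Om {\<omega>. surv (sh 1 (sh m D)) \<omega>}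
            - (measure Om {\<omega>. surv (sh 1 (sh m D)) \<omega>})^2 - 2 * x) + x"
    unfolding F_def
  proof (rule key_II[OF _ _ _ Es E1 S0])
    show "2 \<le> sh m D t" for t using D2 by (simp add: sh_def)
    show "measure Om {\<omega>. surv (sh l (sh m D)) \<omega>} \<le> x" for l using Fx[of "l + m"] by (simp add: F_def)
    show "real (card (CC (sh m D) r)) \<le> S r" if "1 \<le> r" for r
      using S[OF that, of m] by (simp add: card_CC sh_def)
  qed
  then have h: "x \<le> (1 - pmf p 0) * (2 * F (m + 1) - (F (m + 1))^2 - 2 * x) + x"
    using m by (simp add: F_def add.commute)
  define y where "y = F (m + 1)"
  have y0: "0 \<le> y" by (simp add: y_def F_def)
  have yx: "y \<le> x" using Fx by (simp add: y_def)
  have "0 \<le> (1 - pmf p 0) * (2 * y - y^2 - 2 * x)" using h by (simp add: y_def)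
  then have c: "0 \<le> 2 * y - y^2 - 2 * x" using p0 by (simp add: zero_le_mult_iff)
  have "y^2 \<le> 0" using c yx by linarith
  then have "y = 0" by simp
  then have "x \<le> 0" using c by simp
  then have "F 0 \<le> 0" using Fx[of 0] by simp
  moreover have "0 \<le> F 0" by (simp add: F_def)
  ultimately have "F 0 = 0" by simp
  then show ?thesis unfolding F_def by simp
qed

end



lemma sorted_prod_lower:
  fixes s :: "nat list"
  assumes "sorted s" "Q \<subseteq> {..<length s}" "card Q = b"
  shows "(\<Prod>j<b. real (s ! j)) \<le> (\<Prod>q\<in>Q. real (s ! q))"
  using assms(2,3)
proof (induction b arbitrary: Q)
  case 0
  then have "Q = {}" using finite_subset[OF _ finite_lessThan] by (metis card_0_eq)
  then show ?case by simp
next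
  case (Suc b)
  have fQ: "finite Q" using Suc.prems(1) finite_subset by blast
  then have ne: "Q \<noteq> {}" using Suc.prems(2) by auto
  define q where "q = Max Q"
  have qQ: "q \<in> Q" using fQ ne by (simp add: q_def)
  have "Q \<subseteq> {..q}" using fQ by (auto simp: q_def)
  then have "card Q \<le> card {..q}" by (intro card_mono) auto
  then have bq: "b \<le> q" using Suc.prems(2) by simp
  have ql: "q < length s" using qQ Suc.prems(1) by auto
  have IH: "(\<Prod>j<b. real (s ! j)) \<le> (\<Prod>q\<in>Q - {q}. real (s ! q))"
    by (rule Suc.IH) (use Suc.prems qQ fQ in auto)
  have "s ! b \<le> s ! q" using assms(1) bq ql by (rule sorted_nth_mono)
  then have "(\<Prod>j<b. real (s ! j)) * real (s ! b) \<le> (\<Prod>q\<in>Q - {q}. real (s ! q)) * real (s ! q)"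
    using IH by (intro mult_mono) (auto intro: prod_nonneg)
  also have "\<dots> = (\<Prod>q\<in>Q. real (s ! q))"
    using fQ qQ by (simp add: prod.remove mult.commute)
  finally show ?case by simp
qed

lemma sorted_prod_upper:
  fixes s :: "nat list"
  assumes "sorted s" "Q \<subseteq> {..<length s}" "card Q = b"
  shows "(\<Prod>q\<in>Q. real (s ! q)) \<le> (\<Prod>j\<in>{length s - b..<length s}. real (s ! j))"
  using assms(2,3)
proof (induction b arbitrary: Q)
  case 0
  then have "Q = {}" using finite_subset[OF _ finite_lessThan] by (metis card_0_eq)
  then show ?case by simp
next
  case (Suc b)
  have fQ: "finite Q" using Suc.prems(1) finite_subset by blast
  then have ne: "Q \<noteq> {}" using Suc.prems(2) by auto
  define q where "q = Min Q"
  have qQ: "q \<in> Q" using fQ ne by (simp add: q_def)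
  have "Q \<subseteq> {q..<length s}" using fQ Suc.prems(1) by (auto simp: q_def)
  then have "card Q \<le> card {q..<length s}" by (intro card_mono) auto
  then have bq: "q \<le> length s - Suc b" using Suc.prems(2) by simp
  have "card Q \<le> card {..<length s}" using Suc.prems(1) by (intro card_mono) auto
  then have bl: "Suc b \<le> length s" using Suc.prems(2) by simp
  have IH: "(\<Prod>q\<in>Q - {q}. real (s ! q)) \<le> (\<Prod>j\<in>{length s - b..<length s}. real (s ! j))"
    by (rule Suc.IH) (use Suc.prems qQ fQ in auto)
  have "s ! q \<le> s ! (length s - Suc b)" using assms(1) bq bl by (intro sorted_nth_mono) auto
  then have "(\<Prod>q\<in>Q - {q}. real (s ! q)) * real (s ! q) \<le> (\<Prod>j\<in>{length s - b..<length s}. real (s ! j)) * real (s ! (length s - Suc b))"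
    using IH by (intro mult_mono) (auto intro: prod_nonneg)
  also have "\<dots> = (\<Prod>j\<in>{length s - Suc b..<length s}. real (s ! j))"
  proof -
    have "{length s - Suc b..<length s} = insert (length s - Suc b) {length s - b..<length s}"
      using bl by auto
    moreover have "length s - Suc b \<notin> {length s - b..<length s}" using bl by auto
    ultimately show ?thesis by (simp add: mult.commute)
  qed
  finally show ?case using fQ qQ by (simp add: prod.remove mult.commute)
qed

locale pd =
  fixes k :: nat and d :: "nat \<Rightarrow> nat"
  assumes k1: "1 \<le> k" and d2: "\<forall>i<k. 2 \<le> d i"
begin

abbreviation s where "s \<equiv> sorted_d k d"

definition bot :: "nat \<Rightarrow> real" where "bot b = (\<Prod>j<b. real (s ! j))"
definition top :: "nat \<Rightarrow> real" where "top b = (\<Prod>j\<in>{k-b..<k}. real (s ! j))"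
definition PI :: real where "PI = (\<Prod>j<k. real (d j))"

lemma len_s[simp]: "length s = k" by (simp add: sorted_d_def)
lemma sorted_s: "sorted s" by (simp add: sorted_d_def)

lemma perm_s: obtains \<sigma> where "\<sigma> permutes {..<k}" "\<And>i. i < k \<Longrightarrow> s ! i = d (\<sigma> i)"
proof -
  have "mset s = mset (map d [0..<k])" by (simp add: sorted_d_def)
  then obtain \<sigma> where \<sigma>: "\<sigma> permutes {..<length (map d [0..<k])}" "permute_list \<sigma> (map d [0..<k]) = s"
    by (rule mset_eq_permutation)
  have "s ! i = d (\<sigma> i)" if "i < k" for i
  proof -
    have "s ! i = permute_list \<sigma> (map d [0..<k]) ! i" using \<sigma>(2) by simp
    also have "\<dots> = map d [0..<k] ! \<sigma> i" using \<sigma>(1) that by (intro permute_list_nth) auto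
    also have "\<dots> = d (\<sigma> i)" using permutes_in_image[OF \<sigma>(1)] that by simp
    finally show ?thesis .
  qed
  then show ?thesis using that \<sigma>(1) by simp
qed

lemma s_ge2: "j < k \<Longrightarrow> 2 \<le> s ! j"
proof -
  assume j: "j < k"
  obtain \<sigma> where \<sigma>: "\<sigma> permutes {..<k}" "\<And>i. i < k \<Longrightarrow> s ! i = d (\<sigma> i)" by (rule perm_s, blast)
  have "\<sigma> j < k" using permutes_in_image[OF \<sigma>(1)] j by simp
  then show ?thesis using \<sigma>(2)[OF j] d2 by simp
qed

lemma prod_d_bounds:
  assumes "Q \<subseteq> {..<k}" "card Q = b"
  shows "bot b \<le> (\<Prod>j\<in>Q. real (d j))" "(\<Prod>j\<in>Q. real (d j)) \<le> top b"
proof -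
  obtain \<sigma> where \<sigma>: "\<sigma> permutes {..<k}" "\<And>i. i < k \<Longrightarrow> s ! i = d (\<sigma> i)" by (rule perm_s, blast)
  define Q' where "Q' = {i \<in> {..<k}. \<sigma> i \<in> Q}"
  have img: "\<sigma> ` Q' = Q"
  proof
    show "\<sigma> ` Q' \<subseteq> Q" by (auto simp: Q'_def)
    show "Q \<subseteq> \<sigma> ` Q'"
    proof
      fix q assume q: "q \<in> Q"
      then have "q \<in> \<sigma> ` {..<k}" using permutes_image[OF \<sigma>(1)] assms(1) by auto
      then obtain i where "i < k" "q = \<sigma> i" by auto
      then show "q \<in> \<sigma> ` Q'" using q by (auto simp: Q'_def)
    qed
  qed
  have inj: "inj_on \<sigma> Q'" using permutes_inj_on[OF \<sigma>(1)] .
  have eq: "(\<Prod>j\<in>Q. real (d j)) = (\<Prod>i\<in>Q'. real (s ! i))"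
  proof -
    have "(\<Prod>j\<in>Q. real (d j)) = (\<Prod>i\<in>Q'. real (d (\<sigma> i)))"
      unfolding img[symmetric] using inj by (simp add: prod.reindex)
    also have "\<dots> = (\<Prod>i\<in>Q'. real (s ! i))" using \<sigma>(2) by (intro prod.cong) (auto simp: Q'_def)
    finally show ?thesis .
  qed
  have cQ': "card Q' = b" using card_image[OF inj] img assms(2) by simp
  have sQ': "Q' \<subseteq> {..<length s}" by (auto simp: Q'_def)
  show "bot b \<le> (\<Prod>j\<in>Q. real (d j))"
    unfolding eq bot_def using sorted_prod_lower[OF sorted_s sQ' cQ'] .
  show "(\<Prod>j\<in>Q. real (d j)) \<le> top b"
    unfolding eq top_def using sorted_prod_upper[OF sorted_s sQ' cQ'] by simp
qed

lemma PI_bot: "PI = bot k" and PI_top: "PI = top k"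
proof -
  have "bot k = top k" by (simp add: bot_def top_def atLeast0LessThan)
  moreover have "bot k \<le> PI" "PI \<le> top k" using prod_d_bounds[of "{..<k}" k] by (auto simp: PI_def)
  ultimately show "PI = bot k" "PI = top k" by auto
qed

end



lemma mod_inj_aux:
  fixes t t' m k :: nat
  assumes "t < k" "t' < k" "(t + m) mod k = (t' + m) mod k" "t' \<le> t"
  shows "t = t'"
proof -
  have "k dvd (t + m) - (t' + m)" using assms(3,4) by (subst mod_eq_dvd_iff_nat[symmetric]) auto
  then have "k dvd t - t'" by simp
  moreover have "t - t' < k" using assms by auto
  ultimately have "t - t' = 0" using dvd_imp_le by (metis neq0_conv not_le)
  then show ?thesis using assms(4) by simp
qed

lemma mod_inj:
  fixes t t' m k :: nat
  assumes "t < k" "t' < k" "(t + m) mod k = (t' + m) mod k"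
  shows "t = t'"
  using mod_inj_aux[OF assms] mod_inj_aux[OF assms(2,1) assms(3)[symmetric]] by linarith

context pd
begin

definition Pp :: "nat \<Rightarrow> nat \<Rightarrow> real" where
  "Pp m l = (\<Prod>t<l. real (d ((t + m) mod k)))"

lemma Pp_add: "Pp m (l1 + l2) = Pp m l1 * Pp (m + l1) l2"
proof (induction l2)
  case 0 then show ?case by (simp add: Pp_def)
next
  case (Suc l2)
  have "Pp m (l1 + Suc l2) = Pp m (l1 + l2) * real (d ((l1 + l2 + m) mod k))"
    by (simp add: Pp_def)
  also have "\<dots> = Pp m l1 * (Pp (m + l1) l2 * real (d ((l2 + (m + l1)) mod k)))"
    using Suc by (simp add: algebra_simps)
  also have "\<dots> = Pp m l1 * Pp (m + l1) (Suc l2)" by (simp add: Pp_def)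
  finally show ?case .
qed

lemma Pp_small:
  assumes "b \<le> k"
  shows "bot b \<le> Pp m b" "Pp m b \<le> top b"
proof -
  define Q where "Q = (\<lambda>t. (t + m) mod k) ` {..<b}"
  have inj: "inj_on (\<lambda>t. (t + m) mod k) {..<b}"
  proof (rule inj_onI)
    fix x y assume "x \<in> {..<b}" "y \<in> {..<b}" "(x + m) mod k = (y + m) mod k"
    then show "x = y" using assms by (intro mod_inj[of x k y m]) auto
  qed
  have eq: "Pp m b = (\<Prod>j\<in>Q. real (d j))"
    unfolding Pp_def Q_def using inj by (simp add: prod.reindex)
  have sub: "Q \<subseteq> {..<k}" using k1 by (auto simp: Q_def)
  have c: "card Q = b" using card_image[OF inj] by (simp add: Q_def)
  show "bot b \<le> Pp m b" "Pp m b \<le> top b" using prod_d_bounds[OF sub c] eq by auto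
qed

lemma Pp_k: "Pp m k = PI"
  using Pp_small[of k m] PI_bot PI_top by auto

lemma Pp_mult: "Pp m (a * k) = PI ^ a"
proof (induction a arbitrary: m)
  case 0 then show ?case by (simp add: Pp_def)
next
  case (Suc a)
  have "Pp m (Suc a * k) = Pp m (k + a * k)" by simp
  also have "\<dots> = Pp m k * Pp (m + k) (a * k)" by (rule Pp_add)
  also have "\<dots> = PI * PI ^ a" using Suc by (simp add: Pp_k)
  finally show ?case by simp
qed

lemma Pp_gen: "Pp m (a * k + b) = PI ^ a * Pp (m + a * k) b"
  using Pp_add[of m "a * k" b] Pp_mult by simp

lemma bot_nonneg: "0 \<le> bot b" by (simp add: bot_def prod_nonneg)
lemma top_nonneg: "0 \<le> top b" by (simp add: top_def prod_nonneg)
lemma PI_pos: "0 < PI"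
  unfolding PI_def using d2 by (intro prod_pos) force

lemma bot_pos: "b \<le> k \<Longrightarrow> 0 < bot b"
  unfolding bot_def
proof (intro prod_pos)
  fix a assume "b \<le> k" "a \<in> {..<b}"
  then have "a < k" by auto
  then show "0 < real (s ! a)" using s_ge2[of a] by simp
qed

lemma T1:
  assumes "b + j \<le> k"
  shows "top b * bot j \<le> top (b + j)"
proof -
  have "top (b + j) = (\<Prod>q\<in>{k - (b + j)..<k - b}. real (s ! q)) * top b"
    unfolding top_def using assms by (subst prod.atLeastLessThan_concat[symmetric]) auto
  moreover have "bot j \<le> (\<Prod>q\<in>{k - (b + j)..<k - b}. real (s ! q))"
    unfolding bot_def by (rule sorted_prod_lower[OF sorted_s]) (use assms in auto)
  ultimately show ?thesis using top_nonneg[of b] by (metis mult.commute mult_left_mono)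
qed

lemma T2:
  assumes "k \<le> b + j" "b \<le> k" "j \<le> k"
  shows "top b * bot j \<le> PI * top (b + j - k)"
proof -
  have bj: "bot j = bot (k - b) * (\<Prod>q\<in>{k - b..<j}. real (s ! q))"
    unfolding bot_def using assms by (simp add: atLeast0LessThan[symmetric] prod.atLeastLessThan_concat)
  have X: "(\<Prod>q\<in>{k - b..<j}. real (s ! q)) \<le> top (b + j - k)"
  proof -
    have "(\<Prod>q\<in>{k - b..<j}. real (s ! q)) \<le> (\<Prod>q\<in>{length s - (b + j - k)..<length s}. real (s ! q))"
      by (rule sorted_prod_upper[OF sorted_s]) (use assms in auto)
    then show ?thesis by (simp add: top_def)
  qed
  have Pk: "PI = bot (k - b) * top b"
  proof -
    have "bot k = bot (k - b) * top b"
      unfolding bot_def top_def using assms by (simp add: atLeast0LessThan[symmetric] prod.atLeastLessThan_concat)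
    then show ?thesis using PI_bot by simp
  qed
  have "top b * bot j = (bot (k - b) * top b) * (\<Prod>q\<in>{k - b..<j}. real (s ! q))"
    using bj by (simp add: algebra_simps)
  also have "\<dots> \<le> (bot (k - b) * top b) * top (b + j - k)"
    using X bot_nonneg top_nonneg by (intro mult_left_mono) auto
  finally show ?thesis using Pk by simp
qed

lemma term_le:
  assumes "q < r"
  shows "Pp m (r - q) * (PI ^ (q div k) * bot (q mod k)) \<le> PI ^ (r div k) * top (r mod k)"
proof -
  define l where "l = r - q"
  define a where "a = l div k"
  define b where "b = l mod k"
  define m1 where "m1 = q div k"
  define j where "j = q mod k"
  have bk: "b < k" "j < k" using k1 by (auto simp: b_def j_def)
  have r_eq: "r = (a + m1) * k + (b + j)"
    using assms by (simp add: a_def b_def m1_def j_def l_def algebra_simps)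
  have "Pp m l = PI ^ a * Pp (m + a * k) b"
    using Pp_gen[of m a b] by (simp add: a_def b_def)
  also have "\<dots> \<le> PI ^ a * top b" using Pp_small[of b] bk PI_pos by (intro mult_left_mono) auto
  finally have Pl: "Pp m l \<le> PI ^ a * top b" .
  have "Pp m l * (PI ^ m1 * bot j) \<le> PI ^ a * top b * (PI ^ m1 * bot j)"
    using Pl bot_nonneg PI_pos by (intro mult_right_mono) auto
  also have "\<dots> = PI ^ (a + m1) * (top b * bot j)" by (simp add: power_add algebra_simps)
  also have "\<dots> \<le> PI ^ (r div k) * top (r mod k)"
  proof (cases "b + j < k")
    case True
    then have "r div k = a + m1" "r mod k = b + j" using r_eq by simp_all
    moreover have "top b * bot j \<le> top (b + j)" using T1 True by simp
    ultimately show ?thesis using PI_pos by (simp add: mult_left_mono)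
  next
    case False
    define c where "c = a + m1 + 1"
    then have r2: "r = c * k + (b + j - k)" using r_eq False by (simp add: algebra_simps)
    have "b + j - k < k" using bk by simp
    then have "r div k = c" "r mod k = b + j - k" using r2 by simp_all
    then have "r div k = a + m1 + 1" "r mod k = b + j - k" by (simp_all add: c_def)
    moreover have "top b * bot j \<le> PI * top (b + j - k)" using T2 False bk by simp
    ultimately show ?thesis using PI_pos by (simp add: mult_left_mono power_add algebra_simps)
  qed
  finally show ?thesis by (simp add: l_def m1_def j_def)
qed

end



lemma sum_split_lt: "(\<Sum>q<a + (b::nat). g q) = (\<Sum>q<a. g q) + (\<Sum>j<b. g (a + j))"
  by (induction b) (simp_all add: algebra_simps)

lemma sum_divmod:
  fixes k :: nat
  assumes "0 < k" "i \<le> k"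
  shows "(\<Sum>q<N * k + i. f (q div k) (q mod k)) = (\<Sum>m<N. \<Sum>j<k. f m j) + (\<Sum>j<i. f N j)"
  using assms(2)
proof (induction i)
  case 0
  show ?case
  proof (induction N)
    case 0 then show ?case by simp
  next
    case (Suc N)
    have "(\<Sum>q<Suc N * k + 0. f (q div k) (q mod k)) = (\<Sum>q<N * k + k. f (q div k) (q mod k))"
      by (simp add: algebra_simps)
    also have "\<dots> = (\<Sum>q<N * k. f (q div k) (q mod k)) + (\<Sum>j<k. f ((N * k + j) div k) ((N * k + j) mod k))"
      by (rule sum_split_lt)
    also have "(\<Sum>j<k. f ((N * k + j) div k) ((N * k + j) mod k)) = (\<Sum>j<k. f N j)"
      using assms(1) by (intro sum.cong) auto
    finally show ?case using Suc by simp
  qed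
next
  case (Suc i)
  have "(N * k + i) div k = N" "(N * k + i) mod k = i" using Suc.prems assms(1) by auto
  then show ?case using Suc by (simp add: add.assoc)
qed

lemma sum_rev_interval: "(\<Sum>q<(r::nat). f (r - q)) = (\<Sum>l=1..r. f l)"
proof (induction r)
  case 0 then show ?case by simp
next
  case (Suc r)
  have "(\<Sum>q<Suc r. f (Suc r - q)) = f (Suc r) + (\<Sum>q<r. f (Suc r - Suc q))"
    by (subst sum.lessThan_Suc_shift) simp
  also have "(\<Sum>q<r. f (Suc r - Suc q)) = (\<Sum>l=1..r. f l)" using Suc by simp
  finally show ?case by (simp add: add.commute)
qed

lemma bern: "0 \<le> (z::real) \<Longrightarrow> z \<le> 1 \<Longrightarrow> real n * (1 - z) * z ^ n \<le> 1 - z ^ n"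
proof (induction n)
  case 0 then show ?case by simp
next
  case (Suc n)
  have zz: "z ^ Suc n \<le> z ^ n" using Suc.prems by (simp add: mult_left_le_one_le)
  have "real (Suc n) * (1 - z) * z ^ Suc n = real n * (1 - z) * z ^ Suc n + (1 - z) * z ^ Suc n"
    by (simp add: algebra_simps)
  also have "\<dots> \<le> real n * (1 - z) * z ^ n + (1 - z) * z ^ n"
    using zz Suc.prems by (intro add_mono mult_left_mono) auto
  also have "\<dots> \<le> (1 - z ^ n) + (z ^ n - z ^ Suc n)"
    using Suc by (simp add: algebra_simps)
  finally show ?case by simp
qed

context pd
begin

lemma Gm_eq: "Gm k d = PI powr (1 / real k)" by (simp add: Gm_def PI_def)

lemma G_pos: "0 < Gm k d" using PI_pos by (simp add: Gm_eq)

lemma G_k: "Gm k d ^ k = PI"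
proof -
  have "Gm k d ^ k = Gm k d powr real k" using G_pos by (simp add: powr_realpow)
  also have "\<dots> = PI powr (1 / real k * real k)" by (simp add: Gm_eq powr_powr)
  also have "\<dots> = PI" using k1 PI_pos by simp
  finally show ?thesis .
qed

lemma G_pow: "Gm k d ^ r = PI ^ (r div k) * Gm k d ^ (r mod k)"
proof -
  have "Gm k d ^ r = Gm k d ^ (k * (r div k) + r mod k)" by (simp only: mult_div_mod_eq)
  also have "\<dots> = (Gm k d ^ k) ^ (r div k) * Gm k d ^ (r mod k)"
    by (simp only: power_add power_mult)
  finally show ?thesis by (simp only: G_k)
qed

lemma Ind_eq: "i < k \<Longrightarrow> Ind k i r = (if r mod k = i then 1 else 0)"
proof -
  assume i: "i < k"
  have "(\<exists>n. r = n * k + i) \<longleftrightarrow> r mod k = i"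
  proof
    assume "\<exists>n. r = n * k + i"
    then obtain n where "r = n * k + i" by auto
    then show "r mod k = i" using i by simp
  next
    assume "r mod k = i"
    then have "r = (r div k) * k + i" using div_mult_mod_eq[of r k] by simp
    then show "\<exists>n. r = n * k + i" by blast
  qed
  then show ?thesis by (simp add: Ind_def)
qed

lemma cc_eq: "cc k d i = bot i / Gm k d ^ i" by (simp add: cc_def bot_def)
lemma cbar_eq: "cbar k d i = top i / Gm k d ^ i" by (simp add: cbar_def top_def)
lemma xlow_eq: "xlow k d n j = PI ^ n * bot j" by (simp add: xlow_def bot_def PI_def)

lemma cc_G: "cc k d (r mod k) * Gm k d ^ r = PI ^ (r div k) * bot (r mod k)"
proof -
  have "cc k d (r mod k) * Gm k d ^ r = bot (r mod k) / Gm k d ^ (r mod k) * (PI ^ (r div k) * Gm k d ^ (r mod k))"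
    by (simp only: cc_eq G_pow[of r])
  then show ?thesis using G_pos by simp
qed

lemma cbar_G: "cbar k d (r mod k) * Gm k d ^ r = PI ^ (r div k) * top (r mod k)"
proof -
  have "cbar k d (r mod k) * Gm k d ^ r = top (r mod k) / Gm k d ^ (r mod k) * (PI ^ (r div k) * Gm k d ^ (r mod k))"
    by (simp only: cbar_eq G_pow[of r])
  then show ?thesis using G_pos by simp
qed

lemma sum_Ind: "(\<Sum>i<k. a i * (b i * Ind k i r)) = a (r mod k) * b (r mod k)"
proof -
  have "(\<Sum>i<k. a i * (b i * Ind k i r)) = (\<Sum>i<k. if r mod k = i then a i * b i else 0)"
    by (intro sum.cong) (auto simp: Ind_eq)
  also have "\<dots> = a (r mod k) * b (r mod k)" using k1 by (simp add: sum.delta)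
  finally show ?thesis .
qed

definition MnN :: "nat \<Rightarrow> nat" where
  "MnN r = (\<Prod>j<k. d j) ^ (r div k) * (\<Prod>j<r mod k. s ! j)"

lemma MnN_real: "real (MnN r) = PI ^ (r div k) * bot (r mod k)"
  by (simp add: MnN_def PI_def bot_def of_nat_prod)

lemma MnN_le: "MnN r \<le> (\<Prod>t<r. d ((t + m) mod k))"
proof -
  have "real (MnN r) = PI ^ (r div k) * bot (r mod k)" by (rule MnN_real)
  also have "\<dots> \<le> PI ^ (r div k) * Pp (m + (r div k) * k) (r mod k)"
    using Pp_small[of "r mod k"] k1 PI_pos by (intro mult_left_mono) auto
  also have "\<dots> = Pp m ((r div k) * k + r mod k)" by (rule Pp_gen[symmetric])
  also have "\<dots> = real (\<Prod>t<r. d ((t + m) mod k))" by (simp add: Pp_def of_nat_prod)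
  finally show ?thesis by (simp only: of_nat_le_iff)
qed

lemma MnN_pos: "1 \<le> MnN r"
proof -
  have "0 < real (MnN r)" unfolding MnN_real using PI_pos bot_pos[of "r mod k"] k1 by simp
  then show ?thesis by simp
qed

lemma MnN_0: "MnN 0 = 1" by (simp add: MnN_def)

lemma sumI_eq: "(\<Sum>i<k. cc k d i * (Gm k d ^ r * Ind k i r)) = real (MnN r)"
  using sum_Ind[of "cc k d" "\<lambda>_. Gm k d ^ r" r] cc_G MnN_real by simp

definition SS :: "nat \<Rightarrow> real" where
  "SS r = cbar k d (r mod k) * hh k d (r mod k) r"

lemma sumII_eq: "(\<Sum>i<k. cbar k d i * (hh k d i r * Ind k i r)) = SS r"
  using sum_Ind[of "cbar k d" "\<lambda>i. hh k d i r" r] by (simp add: SS_def)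

lemma hh_eq: "hh k d (r mod k) r = (\<Sum>q<r. 1 / xlow k d (q div k) (q mod k)) * Gm k d ^ r"
proof -
  have N: "(r - r mod k) div k = r div k" using k1 by (simp add: minus_mod_eq_mult_div)
  have "(\<Sum>q<r. 1 / xlow k d (q div k) (q mod k)) = (\<Sum>q<(r div k) * k + r mod k. 1 / xlow k d (q div k) (q mod k))"
    by simp
  also have "\<dots> = (\<Sum>m<r div k. \<Sum>j<k. 1 / xlow k d m j) + (\<Sum>j<r mod k. 1 / xlow k d (r div k) j)"
    using k1 by (intro sum_divmod[where f="\<lambda>a b. 1 / xlow k d a b"]) auto
  finally show ?thesis by (simp add: hh_def N Let_def)
qed

lemma hh_nonneg: "0 \<le> hh k d i r"
  unfolding hh_def Let_def using G_pos PI_pos bot_nonneg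
  by (intro mult_nonneg_nonneg add_nonneg_nonneg sum_nonneg) (auto simp: xlow_eq)

lemma cbar_nonneg: "0 \<le> cbar k d i" using G_pos top_nonneg by (simp add: cbar_eq)
lemma cc_nonneg: "0 \<le> cc k d i" using G_pos bot_nonneg by (simp add: cc_eq)

lemma SS_nonneg: "0 \<le> SS r" by (simp add: SS_def cbar_nonneg hh_nonneg)

lemma SS_bound: "(\<Sum>l=1..r. real (\<Prod>t<l. d ((t + m) mod k))) \<le> SS r"
proof -
  have "(\<Sum>q<r. Pp m (r - q)) = (\<Sum>l=1..r. Pp m l)" by (rule sum_rev_interval)
  then have "(\<Sum>l=1..r. real (\<Prod>t<l. d ((t + m) mod k))) = (\<Sum>q<r. Pp m (r - q))"
    by (simp add: Pp_def of_nat_prod)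
  also have "\<dots> \<le> (\<Sum>q<r. cbar k d (r mod k) * Gm k d ^ r / xlow k d (q div k) (q mod k))"
  proof (rule sum_mono)
    fix q assume q: "q \<in> {..<r}"
    have pos: "0 < PI ^ (q div k) * bot (q mod k)" using PI_pos bot_pos[of "q mod k"] k1 by simp
    have "Pp m (r - q) * (PI ^ (q div k) * bot (q mod k)) \<le> PI ^ (r div k) * top (r mod k)"
      using term_le q by simp
    then have "Pp m (r - q) \<le> PI ^ (r div k) * top (r mod k) / (PI ^ (q div k) * bot (q mod k))"
      using pos by (simp add: pos_le_divide_eq)
    then show "Pp m (r - q) \<le> cbar k d (r mod k) * Gm k d ^ r / xlow k d (q div k) (q mod k)"
      by (simp add: cbar_G xlow_eq)
  qed
  also have "\<dots> = SS r"
    by (simp add: SS_def hh_eq sum_distrib_left sum_distrib_right)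
  finally show ?thesis .
qed

lemma SS_0: "SS 0 = 0" by (simp add: SS_def hh_def)

end



lemma z_exists:
  fixes q :: "nat \<Rightarrow> real" and Mn :: "nat \<Rightarrow> nat"
  assumes q0: "\<And>r. 0 \<le> q r" and qs: "q sums 1" and M1: "\<And>r. 1 \<le> Mn r" and Mn0: "Mn 0 = 1"
    and K: "1 + q 0 < (\<Sum>r<K. q r * real (Mn r))"
  shows "\<exists>z. 0 \<le> z \<and> z < 1 \<and> (\<Sum>r. q r * (if r = 0 then 1 else z ^ Mn r)) \<le> z"
proof -
  have K0: "0 < K"
  proof (rule ccontr)
    assume "\<not> 0 < K" then have "K = 0" by simp
    then show False using K q0[of 0] by simp
  qed
  define A where "A = (\<Sum>r<K. if r = 0 then 0 else q r * real (Mn r))"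
  have split: "(\<Sum>r<K. q r * real (Mn r)) = (\<Sum>r<K. if r = 0 then q 0 else 0) + A"
    unfolding A_def sum.distrib[symmetric] using Mn0 by (intro sum.cong) auto
  have "(\<Sum>r<K. if r = 0 then q 0 else 0) = q 0" using K0 by (simp add: sum.delta')
  then have A1: "1 < A" using split K by simp
  define M where "M = (\<Sum>r<K. Mn r)"
  have MnM: "Mn r \<le> M" if "r < K" for r
    unfolding M_def using that by (intro member_le_sum) auto
  have M0: "0 < M" using MnM[OF K0] M1[of 0] by simp
  define z where "z = root M (1 / A)"
  have z0: "0 < z" using A1 M0 by (simp add: z_def)
  have z1: "z < 1" using A1 M0 by (simp add: z_def)
  have zM: "z ^ M = 1 / A" using A1 M0 by (simp add: z_def real_root_pow_pos)
  define w where "w r = (if r = 0 then 0 else 1 - z ^ Mn r)" for r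
  have w0: "0 \<le> w r" for r using z0 z1 by (simp add: w_def power_le_one)
  have w1: "w r \<le> 1" for r using z0 by (simp add: w_def)
  have sqw: "summable (\<lambda>r. q r * w r)"
    by (rule summable_comparison_test[OF _ sums_summable[OF qs]]) (use q0 w0 w1 in \<open>auto intro!: mult_left_le\<close>)
  have eqt: "(\<lambda>r. q r * (if r = 0 then 1 else z ^ Mn r)) = (\<lambda>r. q r - q r * w r)"
    by (auto simp: w_def fun_eq_iff algebra_simps)
  have ts: "(\<lambda>r. q r * (if r = 0 then 1 else z ^ Mn r)) sums (1 - (\<Sum>r. q r * w r))"
    unfolding eqt by (rule sums_diff[OF qs summable_sums[OF sqw]])
  have "(\<Sum>r<K. q r * w r) \<le> (\<Sum>r. q r * w r)"
    by (rule sum_le_suminf[OF sqw]) (use q0 w0 in auto)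
  moreover have "A * ((1 - z) * z ^ M) \<le> (\<Sum>r<K. q r * w r)"
  proof -
    have "A * ((1 - z) * z ^ M) = (\<Sum>r<K. (if r = 0 then 0 else q r * real (Mn r)) * ((1 - z) * z ^ M))"
      by (simp add: A_def sum_distrib_right)
    also have "\<dots> \<le> (\<Sum>r<K. q r * w r)"
    proof (rule sum_mono)
      fix r assume r: "r \<in> {..<K}"
      show "(if r = 0 then 0 else q r * real (Mn r)) * ((1 - z) * z ^ M) \<le> q r * w r"
      proof (cases "r = 0")
        case True then show ?thesis by (simp add: w_def)
      next
        case False
        have "z ^ M \<le> z ^ Mn r" using MnM r z0 z1 by (intro power_decreasing) auto
        then have "(real (Mn r) * (1 - z)) * z ^ M \<le> (real (Mn r) * (1 - z)) * z ^ Mn r"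
          using z1 by (intro mult_left_mono) auto
        then have "real (Mn r) * ((1 - z) * z ^ M) \<le> real (Mn r) * (1 - z) * z ^ Mn r"
          by (simp add: mult.assoc)
        also have "\<dots> \<le> 1 - z ^ Mn r" using bern z0 z1 by simp
        finally have "real (Mn r) * ((1 - z) * z ^ M) \<le> w r" using False by (simp add: w_def)
        then have "q r * (real (Mn r) * ((1 - z) * z ^ M)) \<le> q r * w r" using q0 by (rule mult_left_mono)
        then show ?thesis using False by (simp add: mult.assoc)
      qed
    qed
    finally show ?thesis .
  qed
  moreover have "A * ((1 - z) * z ^ M) = 1 - z" using zM A1 by simp
  ultimately have "1 - z \<le> (\<Sum>r. q r * w r)" by simp
  then have "(\<Sum>r. q r * (if r = 0 then 1 else z ^ Mn r)) \<le> z" using sums_unique[OF ts] by simp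
  then show ?thesis using z0 z1 by (intro exI[of _ z]) auto
qed

lemma hyp_conv:
  fixes a :: "nat \<Rightarrow> real" and f :: "nat \<Rightarrow> nat \<Rightarrow> real" and I :: "nat set"
  assumes a0: "\<And>i. 0 \<le> a i" and f0: "\<And>i r. 0 \<le> f i r"
  shows "(\<Sum>i\<in>I. ennreal (a i) * (\<integral>\<^sup>+r. ennreal (f i r) \<partial>measure_pmf p)) = (\<Sum>r. ennreal (pmf p r * (\<Sum>i\<in>I. a i * f i r)))"
proof -
  have "(\<Sum>i\<in>I. ennreal (a i) * (\<integral>\<^sup>+r. ennreal (f i r) \<partial>measure_pmf p)) = (\<Sum>i\<in>I. \<integral>\<^sup>+r. ennreal (a i * f i r) \<partial>measure_pmf p)"
    by (intro sum.cong refl) (simp add: ennreal_mult a0 f0 nn_integral_cmult)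
  also have "\<dots> = (\<integral>\<^sup>+r. (\<Sum>i\<in>I. ennreal (a i * f i r)) \<partial>measure_pmf p)"
    by (rule nn_integral_sum[symmetric]) simp
  also have "\<dots> = (\<integral>\<^sup>+r. ennreal (\<Sum>i\<in>I. a i * f i r) \<partial>measure_pmf p)"
    using a0 f0 by (simp add: sum_ennreal)
  also have "\<dots> = (\<Sum>r. ennreal (pmf p r) * ennreal (\<Sum>i\<in>I. a i * f i r))"
    by (simp add: nn_integral_measure_pmf nn_integral_count_space_nat)
  also have "\<dots> = (\<Sum>r. ennreal (pmf p r * (\<Sum>i\<in>I. a i * f i r)))"
  proof -
    have nn: "0 \<le> (\<Sum>i\<in>I. a i * f i r)" for r by (intro sum_nonneg) (simp add: a0 f0)
    show ?thesis by (simp add: ennreal_mult nn)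
  qed
  finally show ?thesis .
qed

lemma infected_eq: "infected k d \<omega> n = Rn (\<lambda>j. d (j mod k)) \<omega> n"
proof (induction n)
  case 0 then show ?case by simp
next
  case (Suc n)
  have "cone k d \<omega> u = cn (\<lambda>j. d (j mod k)) \<omega> u" for u
    by (simp add: cone_def cn_def tree_plus_def TT_def)
  then show ?case using Suc by simp
qed

lemma survives_eq: "survives k d \<omega> \<longleftrightarrow> surv (\<lambda>j. d (j mod k)) \<omega>"
proof -
  have "(\<Union>n. infected k d \<omega> n) = {v. rch (\<lambda>j. d (j mod k)) \<omega> v}"
    by (auto simp: infected_eq rch_iff_Rn)
  then show ?thesis by (simp add: survives_def surv_def)
qed




theorem theorem2:
  fixes k :: nat and d :: "nat \<Rightarrow> nat" and p :: "nat pmf"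
  assumes "k \<ge> 1" and "\<forall>i<k. d i \<ge> 2"
    and "0 < pmf p 0" and "pmf p 0 < 1"
  shows "((\<Sum>i<k. ennreal (cc k d i) *
            (\<integral>\<^sup>+ r. ennreal (Gm k d ^ r * Ind k i r) \<partial>measure_pmf p))
           > 1 + ennreal (pmf p 0)
          \<longrightarrow> survival_event k d p \<in> sets (perc_space p)
              \<and> emeasure (perc_space p) (survival_event k d p) > 0)
       \<and> ((\<Sum>i<k. ennreal (cbar k d i) *
            (\<integral>\<^sup>+ r. ennreal (hh k d i r * Ind k i r) \<partial>measure_pmf p)) \<le> 1
          \<longrightarrow> survival_event k d p \<in> sets (perc_space p)
              \<and> emeasure (perc_space p) (survival_event k d p) = 0)"
proof -
  interpret perc p .
  interpret pd k d using assms(1,2) by unfold_locales auto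
  define Dk where "Dk = (\<lambda>j. d (j mod k))"
  have SE: "survival_event k d p = {\<omega>. surv Dk \<omega>}"
    by (auto simp: survival_event_def survives_eq Dk_def)
  have sets: "survival_event k d p \<in> sets (perc_space p)"
    unfolding SE by (rule surv_sets)
  have emeq: "emeasure (perc_space p) (survival_event k d p) = ennreal (measure (perc_space p) {\<omega>. surv Dk \<omega>})"
    unfolding SE using surv_sets by (simp add: P.emeasure_eq_measure)
  show ?thesis
  proof (intro conjI impI)
    assume H: "(\<Sum>i<k. ennreal (cc k d i) *
            (\<integral>\<^sup>+ r. ennreal (Gm k d ^ r * Ind k i r) \<partial>measure_pmf p)) > 1 + ennreal (pmf p 0)"
    have "(\<Sum>i<k. ennreal (cc k d i) * (\<integral>\<^sup>+ r. ennreal (Gm k d ^ r * Ind k i r) \<partial>measure_pmf p))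
        = (\<Sum>r. ennreal (pmf p r * (\<Sum>i<k. cc k d i * (Gm k d ^ r * Ind k i r))))"
      by (rule hyp_conv) (auto simp: cc_nonneg Ind_def G_pos less_imp_le)
    also have "\<dots> = (\<Sum>r. ennreal (pmf p r * real (MnN r)))" by (simp add: sumI_eq)
    finally have "ennreal (1 + pmf p 0) < (\<Sum>r. ennreal (pmf p r * real (MnN r)))"
      using H by simp
    then obtain K where K0: "ennreal (1 + pmf p 0) < (\<Sum>r<K. ennreal (pmf p r * real (MnN r)))"
      unfolding suminf_eq_SUP by (auto simp: less_SUP_iff)
    have "(\<Sum>r<K. ennreal (pmf p r * real (MnN r))) = ennreal (\<Sum>r<K. pmf p r * real (MnN r))"
      by (rule sum_ennreal) simp
    then have "ennreal (1 + pmf p 0) < ennreal (\<Sum>r<K. pmf p r * real (MnN r))" using K0 by simp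
    then have K: "1 + pmf p 0 < (\<Sum>r<K. pmf p r * real (MnN r))"
      by (rule ennreal_less_iff[THEN iffD1, rotated]) simp
    obtain z where z: "0 \<le> z" "z < 1" "(\<Sum>r. pmf p r * (if r = 0 then 1 else z ^ MnN r)) \<le> z"
      using z_exists[OF pmf_nonneg pmf_sums MnN_pos MnN_0 K] by blast
    have "1 - z \<le> measure (perc_space p) {\<omega>. surv Dk \<omega>}"
    proof (rule surv_I[OF _ z])
      show "MnN r \<le> (\<Prod>t<r. Dk (t + m))" for m r using MnN_le[of r m] by (simp add: Dk_def)
    qed
    then have "0 < measure (perc_space p) {\<omega>. surv Dk \<omega>}" using z by simp
    then show "emeasure (perc_space p) (survival_event k d p) > 0" using emeq by simp
  next
    assume H: "(\<Sum>i<k. ennreal (cbar k d i) *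
            (\<integral>\<^sup>+ r. ennreal (hh k d i r * Ind k i r) \<partial>measure_pmf p)) \<le> 1"
    have "(\<Sum>i<k. ennreal (cbar k d i) * (\<integral>\<^sup>+ r. ennreal (hh k d i r * Ind k i r) \<partial>measure_pmf p))
        = (\<Sum>r. ennreal (pmf p r * (\<Sum>i<k. cbar k d i * (hh k d i r * Ind k i r))))"
      by (rule hyp_conv) (auto simp: cbar_nonneg Ind_def hh_nonneg)
    also have "\<dots> = (\<Sum>r. ennreal (pmf p r * SS r))" by (simp add: sumII_eq)
    finally have le1: "(\<Sum>r. ennreal (pmf p r * SS r)) \<le> 1" using H by simp
    have nn: "0 \<le> pmf p r * SS r" for r by (simp add: SS_nonneg)
    have sm: "summable (\<lambda>r. pmf p r * SS r)"
      by (rule summable_suminf_not_top[OF nn]) (use le1 in \<open>auto simp: top_unique\<close>)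
    have E1: "(\<Sum>r. pmf p r * SS r) \<le> 1" using le1 suminf_ennreal2[OF nn sm] by simp
    have "measure (perc_space p) {\<omega>. surv Dk \<omega>} = 0"
    proof (rule surv_II[OF assms(1) _ _ _ summable_sums[OF sm] E1 SS_nonneg assms(4)])
      show "sh m Dk = sh (m mod k) Dk" for m by (simp add: sh_def Dk_def fun_eq_iff mod_add_right_eq)
      show "2 \<le> Dk t" for t using assms(1,2) by (simp add: Dk_def)
      show "(\<Sum>l=1..r. real (\<Prod>t<l. Dk (t + m))) \<le> SS r" for m r
        using SS_bound[of m r] by (simp add: Dk_def)
    qed
    then show "emeasure (perc_space p) (survival_event k d p) = 0" using emeq by simp
  qed (rule sets)+
qed



end
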